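(* Let $\mathcal A$ be the set of triples $(\mathfrak g,\theta,h)$ with $\mathfrak g$ a semisimple real Lie algebra, $h$ an Euler element of $\mathfrak g$ and $\theta$ a Cartan involution with $\theta(h)=-h$; let $\mathcal B$ be the set of triples $(\mathfrak g,\tau,z)$ with $\mathfrak g$ semisimple, $z$ an H-element of $\mathfrak g$ and $\tau$ an involution of $\mathfrak g$ with $\tau(z)=-z$. Then $\Phi(\mathfrak g,\theta,h):=(\mathfrak g^c,\tau^c,ih)$, where $\tau:=\tau_h\theta$, $\mathfrak g^c:=\mathfrak g^\tau+i\mathfrak g^{-\tau}\subseteq\mathfrak g_{\mathbb C}$ and $\tau^c(x+iy)=x-iy$, defines a bijection $\Phi:\mathcal A\to\mathcal B$.
   Context: Euler element: $\mathrm{ad}\,h\ne0$ diagonalizable with spectrum in $\{-1,0,1\}$; $\tau_h=e^{\pi i\,\mathrm{ad}\,h}$ acts by $(-1)^j$ on the $j$-eigenspace of $\mathrm{ad}\,h$. An element $z$ of a reductive Lie algebra $\mathfrak l$ is an H-element if $iz$ is an Euler element of $\mathfrak l_{\mathbb C}$ and $\ker(\mathrm{ad}\,z)$ is maximal compactly embedded in $\mathfrak l$ (equivalently $e^{\pi\,\mathrm{ad}\,z}$ restricts to a Cartan involution of $[\mathfrak l,\mathfrak l]$). *)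

theory Defs
  imports "HOL-Analysis.Analysis"
begin

text \<open>Ambient setting: a finite-dimensional complex Lie algebra L, realised as
  complex^'n with a complex-bilinear bracket br. Real Lie algebras are real
  forms g of L (so L = g_C); real subspaces use the real vector space structure
  of complex^'n (scaleR).\<close>

definition complex_lie :: "(complex^'n \<Rightarrow> complex^'n \<Rightarrow> complex^'n) \<Rightarrow> bool" where
  "complex_lie br \<longleftrightarrow>
     (\<forall>x y z. br (x + y) z = br x z + br y z) \<and>
     (\<forall>x y z. br x (y + z) = br x y + br x z) \<and>
     (\<forall>c x y. br (c *s x) y = c *s br x y) \<and>
     (\<forall>c x y. br x (c *s y) = c *s br x y) \<and>
     (\<forall>x. br x x = 0) \<and>
     (\<forall>x y z. br x (br y z) + br y (br z x) + br z (br x y) = 0)"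

definition real_form :: "(complex^'n \<Rightarrow> complex^'n \<Rightarrow> complex^'n) \<Rightarrow> (complex^'n) set \<Rightarrow> bool" where
  "real_form br g \<longleftrightarrow> subspace g \<and> (\<forall>x\<in>g. \<forall>y\<in>g. br x y \<in> g) \<and>
     (\<forall>v. \<exists>!p. fst p \<in> g \<and> snd p \<in> g \<and> v = fst p + \<i> *s snd p)"

definition lie_ideal :: "(complex^'n \<Rightarrow> complex^'n \<Rightarrow> complex^'n) \<Rightarrow> (complex^'n) set \<Rightarrow> (complex^'n) set \<Rightarrow> bool" where
  "lie_ideal br g I \<longleftrightarrow> subspace I \<and> I \<subseteq> g \<and> (\<forall>x\<in>g. \<forall>y\<in>I. br x y \<in> I)"

definition derived :: "(complex^'n \<Rightarrow> complex^'n \<Rightarrow> complex^'n) \<Rightarrow> (complex^'n) set \<Rightarrow> (complex^'n) set" where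
  "derived br S = span {br x y | x y. x \<in> S \<and> y \<in> S}"

definition solvable_lie :: "(complex^'n \<Rightarrow> complex^'n \<Rightarrow> complex^'n) \<Rightarrow> (complex^'n) set \<Rightarrow> bool" where
  "solvable_lie br I \<longleftrightarrow> (\<exists>k. (derived br ^^ k) I = {0})"

definition semisimple :: "(complex^'n \<Rightarrow> complex^'n \<Rightarrow> complex^'n) \<Rightarrow> (complex^'n) set \<Rightarrow> bool" where
  "semisimple br g \<longleftrightarrow> (\<forall>I. lie_ideal br g I \<and> solvable_lie br I \<longrightarrow> I = {0})"

definition trace_on :: "(complex^'n) set \<Rightarrow> (complex^'n \<Rightarrow> complex^'n) \<Rightarrow> real" where
  "trace_on S f = (let B = (SOME B. independent B \<and> span B = S) in
                     \<Sum>b\<in>B. representation B (f b) b)"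

definition killing :: "(complex^'n \<Rightarrow> complex^'n \<Rightarrow> complex^'n) \<Rightarrow> (complex^'n) set \<Rightarrow> complex^'n \<Rightarrow> complex^'n \<Rightarrow> real" where
  "killing br S x y = trace_on S (\<lambda>v. br x (br y v))"

definition lie_involution :: "(complex^'n \<Rightarrow> complex^'n \<Rightarrow> complex^'n) \<Rightarrow> (complex^'n) set \<Rightarrow> (complex^'n \<Rightarrow> complex^'n) \<Rightarrow> bool" where
  "lie_involution br S f \<longleftrightarrow> (\<forall>x\<in>S. f x \<in> S) \<and>
     (\<forall>x\<in>S. \<forall>y\<in>S. f (x + y) = f x + f y) \<and>
     (\<forall>x\<in>S. \<forall>r::real. f (r *\<^sub>R x) = r *\<^sub>R f x) \<and>
     (\<forall>x\<in>S. \<forall>y\<in>S. f (br x y) = br (f x) (f y)) \<and>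
     (\<forall>x\<in>S. f (f x) = x)"

definition cartan_involution :: "(complex^'n \<Rightarrow> complex^'n \<Rightarrow> complex^'n) \<Rightarrow> (complex^'n) set \<Rightarrow> (complex^'n \<Rightarrow> complex^'n) \<Rightarrow> bool" where
  "cartan_involution br S f \<longleftrightarrow> lie_involution br S f \<and>
     (\<forall>x\<in>S. x \<noteq> 0 \<longrightarrow> - killing br S x (f x) > 0)"

definition eigsp :: "(complex^'n \<Rightarrow> complex^'n \<Rightarrow> complex^'n) \<Rightarrow> (complex^'n) set \<Rightarrow> complex^'n \<Rightarrow> real \<Rightarrow> (complex^'n) set" where
  "eigsp br S h j = {y \<in> S. br h y = j *\<^sub>R y}"

text \<open>Euler element of the Lie algebra S (S = g real, or S = UNIV = L complex):
  ad h nonzero, diagonalizable with spectrum in {-1,0,1}.\<close>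
definition euler_elem :: "(complex^'n \<Rightarrow> complex^'n \<Rightarrow> complex^'n) \<Rightarrow> (complex^'n) set \<Rightarrow> complex^'n \<Rightarrow> bool" where
  "euler_elem br S h \<longleftrightarrow> h \<in> S \<and> (\<exists>y\<in>S. br h y \<noteq> 0) \<and>
     (\<forall>v\<in>S. \<exists>a b c. a \<in> eigsp br S h (-1) \<and> b \<in> eigsp br S h 0 \<and> c \<in> eigsp br S h 1 \<and> v = a + b + c)"

definition tau_h :: "(complex^'n \<Rightarrow> complex^'n \<Rightarrow> complex^'n) \<Rightarrow> (complex^'n) set \<Rightarrow> complex^'n \<Rightarrow> complex^'n \<Rightarrow> complex^'n" where
  "tau_h br S h v = (THE w. \<exists>a b c. a \<in> eigsp br S h (-1) \<and> b \<in> eigsp br S h 0 \<and>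
       c \<in> eigsp br S h 1 \<and> v = a + b + c \<and> w = - a + b - c)"

definition exp_ad :: "(complex^'n \<Rightarrow> complex^'n \<Rightarrow> complex^'n) \<Rightarrow> real \<Rightarrow> complex^'n \<Rightarrow> complex^'n \<Rightarrow> complex^'n" where
  "exp_ad br t z v = (\<Sum>k. (t ^ k / fact k) *\<^sub>R ((br z ^^ k) v))"

text \<open>H-element of g (g a real form of L, so g_C = L = UNIV): i z is an Euler element
  of L and e^{pi ad z} restricts to a Cartan involution of [g,g].\<close>
definition H_elem :: "(complex^'n \<Rightarrow> complex^'n \<Rightarrow> complex^'n) \<Rightarrow> (complex^'n) set \<Rightarrow> complex^'n \<Rightarrow> bool" where
  "H_elem br g z \<longleftrightarrow> z \<in> g \<and> euler_elem br UNIV (\<i> *s z) \<and>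
     cartan_involution br (derived br g) (exp_ad br pi z)"

text \<open>Maps on g are represented extensionally: value 0 outside g.\<close>
definition extensional0 :: "(complex^'n) set \<Rightarrow> (complex^'n \<Rightarrow> complex^'n) \<Rightarrow> bool" where
  "extensional0 S f \<longleftrightarrow> (\<forall>v. v \<notin> S \<longrightarrow> f v = 0)"

definition setA :: "(complex^'n \<Rightarrow> complex^'n \<Rightarrow> complex^'n)
     \<Rightarrow> ((complex^'n) set \<times> (complex^'n \<Rightarrow> complex^'n) \<times> (complex^'n)) set" where
  "setA br = {(g, \<theta>, h). real_form br g \<and> semisimple br g \<and> euler_elem br g h \<and>
      cartan_involution br g \<theta> \<and> \<theta> h = - h \<and> extensional0 g \<theta>}"

definition setB :: "(complex^'n \<Rightarrow> complex^'n \<Rightarrow> complex^'n)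
     \<Rightarrow> ((complex^'n) set \<times> (complex^'n \<Rightarrow> complex^'n) \<times> (complex^'n)) set" where
  "setB br = {(g, \<tau>, z). real_form br g \<and> semisimple br g \<and> H_elem br g z \<and>
      lie_involution br g \<tau> \<and> \<tau> z = - z \<and> extensional0 g \<tau>}"

definition Phi :: "(complex^'n \<Rightarrow> complex^'n \<Rightarrow> complex^'n)
     \<Rightarrow> (complex^'n) set \<times> (complex^'n \<Rightarrow> complex^'n) \<times> (complex^'n)
     \<Rightarrow> (complex^'n) set \<times> (complex^'n \<Rightarrow> complex^'n) \<times> (complex^'n)" where
  "Phi br = (\<lambda>(g, \<theta>, h).
     let \<tau> = (\<lambda>v. if v \<in> g then tau_h br g h (\<theta> v) else 0);
         gc = {x + \<i> *s y | x y. x \<in> g \<and> \<tau> x = x \<and> y \<in> g \<and> \<tau> y = - y};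
         \<tau>c = (\<lambda>v. if v \<in> gc then (THE w. \<exists>x y. x \<in> g \<and> \<tau> x = x \<and> y \<in> g \<and> \<tau> y = - y \<and>
                      v = x + \<i> *s y \<and> w = x - \<i> *s y) else 0)
     in (gc, \<tau>c, \<i> *s h))"

end

theory Submission
  imports Defs
begin

lemma scaleR_vec_eq: "(r::real) *\<^sub>R (v::complex^'n) = complex_of_real r *s v"
  unfolding vec_eq_iff by (simp add: scaleR_conv_of_real[where 'a=complex])

lemma cplx_sR: "(r::real) *\<^sub>R (c::complex) = complex_of_real r * c"
  by (simp add: scaleR_conv_of_real)

lemma vec_sR_comp: "((r::real) *\<^sub>R (v::complex^'n)) $ i = complex_of_real r * v $ i"
  unfolding vector_scaleR_component by (simp add: scaleR_conv_of_real)

lemma ii_vec[simp]: "\<i> *s (\<i> *s (v::complex^'n)) = - v"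
  by (simp add: vec_eq_iff)

lemma smult_add_vec[simp]: "(c::complex) *s (x + y) = c *s x + c *s (y::complex^'n)"
  by (simp add: vector_add_ldistrib)
lemma smult_diff_vec[simp]: "(c::complex) *s (x - y) = c *s x - c *s (y::complex^'n)"
  by (simp add: vector_ssub_ldistrib)
lemma smult_neg_vec[simp]: "(c::complex) *s (- y) = - (c *s (y::complex^'n))"
  by (simp add: vec_eq_iff)
lemma smult_scaleR_vec[simp]: "(c::complex) *s (r *\<^sub>R y) = r *\<^sub>R (c *s (y::complex^'n))"
  by (simp add: vec_eq_iff)
lemma smult_smult_vec[simp]: "(c::complex) *s (d *s y) = (c * d) *s (y::complex^'n)"
  by (simp add: vec_eq_iff)

definition rfre :: "(complex^'n) set \<Rightarrow> complex^'n \<Rightarrow> complex^'n" where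
  "rfre S v = fst (THE p. fst p \<in> S \<and> snd p \<in> S \<and> v = fst p + \<i> *s snd p)"
definition rfim :: "(complex^'n) set \<Rightarrow> complex^'n \<Rightarrow> complex^'n" where
  "rfim S v = snd (THE p. fst p \<in> S \<and> snd p \<in> S \<and> v = fst p + \<i> *s snd p)"
definition cj :: "(complex^'n) set \<Rightarrow> complex^'n \<Rightarrow> complex^'n" where
  "cj S v = rfre S v - \<i> *s rfim S v"
definition tw :: "(complex^'n) set \<Rightarrow> (complex^'n \<Rightarrow> complex^'n) \<Rightarrow> (complex^'n) set" where
  "tw S \<tau> = {x + \<i> *s y | x y. x \<in> S \<and> \<tau> x = x \<and> y \<in> S \<and> \<tau> y = - y}"

context
  fixes br :: "complex^'n \<Rightarrow> complex^'n \<Rightarrow> complex^'n" and S :: "(complex^'n) set"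
  assumes rf: "real_form br S"
begin

lemma rf_sub: "subspace S" using rf by (simp add: real_form_def)
lemma rf_brc: "x \<in> S \<Longrightarrow> y \<in> S \<Longrightarrow> br x y \<in> S" using rf by (simp add: real_form_def)

lemma rf_dec: "rfre S v \<in> S" "rfim S v \<in> S" "v = rfre S v + \<i> *s rfim S v"
proof -
  have ex: "\<exists>!p. fst p \<in> S \<and> snd p \<in> S \<and> v = fst p + \<i> *s snd p"
    using rf by (simp add: real_form_def)
  note th = theI'[OF ex]
  show "rfre S v \<in> S" "rfim S v \<in> S" "v = rfre S v + \<i> *s rfim S v"
    using th by (simp_all add: rfre_def rfim_def)
qed

lemma rf_uniq:
  assumes "x \<in> S" "y \<in> S" "v = x + \<i> *s y"
  shows "rfre S v = x" "rfim S v = y"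
proof -
  have ex: "\<exists>!p. fst p \<in> S \<and> snd p \<in> S \<and> v = fst p + \<i> *s snd p"
    using rf by (simp add: real_form_def)
  have "(THE p. fst p \<in> S \<and> snd p \<in> S \<and> v = fst p + \<i> *s snd p) = (x, y)"
    by (rule the1_equality[OF ex]) (use assms in simp)
  then show "rfre S v = x" "rfim S v = y" by (simp_all add: rfre_def rfim_def)
qed

lemma rf_S[simp]: "x \<in> S \<Longrightarrow> rfre S x = x" "x \<in> S \<Longrightarrow> rfim S x = 0"
  using rf_uniq[of x 0 x] subspace_0[OF rf_sub] by auto

lemma rf_iS[simp]: "x \<in> S \<Longrightarrow> rfre S (\<i> *s x) = 0" "x \<in> S \<Longrightarrow> rfim S (\<i> *s x) = x"
  using rf_uniq[of 0 x "\<i> *s x"] subspace_0[OF rf_sub] by auto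

lemma rf_add: "rfre S (u + v) = rfre S u + rfre S v" "rfim S (u + v) = rfim S u + rfim S v"
proof -
  have e: "u + v = (rfre S u + rfre S v) + \<i> *s (rfim S u + rfim S v)"
    using rf_dec[of u] rf_dec[of v] by (metis (no_types, lifting) add.assoc add.left_commute smult_add_vec)
  show "rfre S (u + v) = rfre S u + rfre S v" "rfim S (u + v) = rfim S u + rfim S v"
    using rf_uniq[OF _ _ e] rf_dec subspace_add[OF rf_sub] by auto
qed

lemma rf_scaleR: "rfre S (r *\<^sub>R v) = r *\<^sub>R rfre S v" "rfim S (r *\<^sub>R v) = r *\<^sub>R rfim S v"
proof -
  have e: "r *\<^sub>R v = (r *\<^sub>R rfre S v) + \<i> *s (r *\<^sub>R rfim S v)"
    using rf_dec[of v] by (metis scaleR_right_distrib smult_scaleR_vec)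
  show "rfre S (r *\<^sub>R v) = r *\<^sub>R rfre S v" "rfim S (r *\<^sub>R v) = r *\<^sub>R rfim S v"
    using rf_uniq[OF _ _ e] rf_dec subspace_scale[OF rf_sub] by auto
qed

lemma rf_i[simp]: "rfre S (\<i> *s v) = - rfim S v" "rfim S (\<i> *s v) = rfre S v"
proof -
  have e: "\<i> *s v = (- rfim S v) + \<i> *s (rfre S v)"
    using rf_dec(3)[of v] by (metis add.commute ii_vec smult_add_vec)
  show "rfre S (\<i> *s v) = - rfim S v" "rfim S (\<i> *s v) = rfre S v"
    using rf_uniq[OF _ _ e] rf_dec subspace_neg[OF rf_sub] by auto
qed

lemma rf_neg[simp]: "rfre S (- v) = - rfre S v" "rfim S (- v) = - rfim S v"
  using rf_scaleR[of "-1" v] by simp_all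

lemma rf_diff: "rfre S (u - v) = rfre S u - rfre S v" "rfim S (u - v) = rfim S u - rfim S v"
  using rf_add[of u "- v"] by simp_all

lemma rf_lin: "linear (rfre S)" "linear (rfim S)"
  by (rule linearI; simp add: rf_add rf_scaleR)+

lemma rf_eqI: "rfre S u = rfre S v \<Longrightarrow> rfim S u = rfim S v \<Longrightarrow> u = v"
  by (metis rf_dec(3))

lemma rf_SiS: "x \<in> S \<Longrightarrow> \<i> *s x \<in> S \<Longrightarrow> x = 0"
  using rf_S(2)[of "\<i> *s x"] rf_iS(2)[of x] by simp

lemma cj_S[simp]: "x \<in> S \<Longrightarrow> cj S x = x" by (simp add: cj_def)
lemma cj_iS[simp]: "x \<in> S \<Longrightarrow> cj S (\<i> *s x) = - (\<i> *s x)" by (simp add: cj_def)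
lemma cj_re[simp]: "rfre S (cj S v) = rfre S v" and cj_im[simp]: "rfim S (cj S v) = - rfim S v"
  using rf_uniq[of "rfre S v" "- rfim S v" "cj S v"] rf_dec subspace_neg[OF rf_sub]
  by (auto simp: cj_def)
lemma cj_cj[simp]: "cj S (cj S v) = v"
  by (rule rf_eqI) simp_all
lemma cj_add: "cj S (u + v) = cj S u + cj S v"
  by (simp add: cj_def rf_add algebra_simps)
lemma cj_scaleR: "cj S (r *\<^sub>R v) = r *\<^sub>R cj S v"
  by (simp add: cj_def rf_scaleR algebra_simps)
lemma cj_neg: "cj S (- v) = - cj S v"
  by (simp add: cj_def rf_neg)
lemma cj_lin: "linear (cj S)"
  by (rule linearI; simp add: cj_add cj_scaleR)
lemma cj_i: "cj S (\<i> *s v) = - (\<i> *s cj S v)"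
  by (simp add: cj_def algebra_simps)

end

locale clie =
  fixes br :: "complex^'n \<Rightarrow> complex^'n \<Rightarrow> complex^'n"
  assumes lie: "complex_lie br"
begin

lemma add_l[simp]: "br (x + y) z = br x z + br y z" using lie by (simp add: complex_lie_def)
lemma add_r[simp]: "br x (y + z) = br x y + br x z" using lie by (simp add: complex_lie_def)
lemma sm_l[simp]: "br (c *s x) y = c *s br x y" using lie by (simp add: complex_lie_def)
lemma sm_r[simp]: "br x (c *s y) = c *s br x y" using lie by (simp add: complex_lie_def)
lemma alt[simp]: "br x x = 0" using lie by (simp add: complex_lie_def)
lemma jac: "br x (br y z) + br y (br z x) + br z (br x y) = 0" using lie by (simp add: complex_lie_def)

lemma zero_l[simp]: "br 0 y = 0"
  using add_l[of 0 0 y] by simp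
lemma zero_r[simp]: "br y 0 = 0"
  using add_r[of y 0 0] by simp
lemma neg_l[simp]: "br (- x) y = - br x y"
  using add_l[of x "-x" y] by (simp add: eq_neg_iff_add_eq_0 add.commute)
lemma neg_r[simp]: "br y (- x) = - br y x"
  using add_r[of y x "-x"] by (simp add: eq_neg_iff_add_eq_0 add.commute)
lemma diff_l[simp]: "br (x - z) y = br x y - br z y"
  using add_l[of x "-z" y] by simp
lemma diff_r[simp]: "br y (x - z) = br y x - br y z"
  using add_r[of y x "-z"] by simp
lemma sR_l[simp]: "br (r *\<^sub>R x) y = r *\<^sub>R br x y"
  by (simp add: scaleR_vec_eq)
lemma sR_r[simp]: "br y (r *\<^sub>R x) = r *\<^sub>R br y x"
  by (simp add: scaleR_vec_eq)
lemma anti: "br y x = - br x y"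
proof -
  have "br (x + y) (x + y) = br x y + br y x" by (simp only: add_l add_r alt[of x] alt[of y] add_0_left add_0_right add.commute)
  then have "br x y + br y x = 0" by simp
  then show ?thesis by (metis add.commute eq_neg_iff_add_eq_0)
qed
lemma jac2: "br x (br y z) = br (br x y) z + br y (br x z)"
proof -
  have "br y (br z x) = - br y (br x z)" using anti[of z x] by simp
  moreover have "br z (br x y) = - br (br x y) z" using anti[of z "br x y"] by simp
  ultimately have "br x (br y z) - br y (br x z) - br (br x y) z = 0" using jac[of x y z] by simp
  then show ?thesis by (simp add: algebra_simps)
qed

lemma lin_l: "linear (\<lambda>x. br x y)"
  by (rule linearI) simp_all
lemma lin_r: "linear (br x)"
  by (rule linearI) simp_all
lemma sum_l: "br (sum f A) y = (\<Sum>a\<in>A. br (f a) y)"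
  by (induct A rule: infinite_finite_induct) simp_all
lemma sum_r: "br y (sum f A) = (\<Sum>a\<in>A. br y (f a))"
  by (induct A rule: infinite_finite_induct) simp_all


lemma rf_br:
  assumes rf: "real_form br S"
  shows "rfre S (br u v) = br (rfre S u) (rfre S v) - br (rfim S u) (rfim S v)"
    and "rfim S (br u v) = br (rfre S u) (rfim S v) + br (rfim S u) (rfre S v)"
proof -
  define a b c d where "a = rfre S u" "b = rfim S u" "c = rfre S v" "d = rfim S v"
  have S: "a \<in> S" "b \<in> S" "c \<in> S" "d \<in> S" using rf_dec[OF rf] a_b_c_d_def by auto
  have "br u v = br (a + \<i> *s b) (c + \<i> *s d)" using rf_dec(3)[OF rf] a_b_c_d_def by metis
  also have "\<dots> = (br a c - br b d) + \<i> *s (br a d + br b c)" by (simp add: algebra_simps)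
  finally have e: "br u v = (br a c - br b d) + \<i> *s (br a d + br b c)" .
  have "br a c - br b d \<in> S" "br a d + br b c \<in> S"
    using S rf_brc[OF rf] subspace_diff[OF rf_sub[OF rf]] subspace_add[OF rf_sub[OF rf]] by auto
  from rf_uniq[OF rf this e] show "rfre S (br u v) = br (rfre S u) (rfre S v) - br (rfim S u) (rfim S v)"
    "rfim S (br u v) = br (rfre S u) (rfim S v) + br (rfim S u) (rfre S v)" by (simp_all add: a_b_c_d_def)
qed

lemma cj_br: assumes rf: "real_form br S" shows "cj S (br u v) = br (cj S u) (cj S v)"
  by (rule rf_eqI[OF rf]) (simp_all add: rf_br[OF rf] cj_re[OF rf] cj_im[OF rf])

end

context clie
begin

context
  fixes S :: "(complex^'n) set" and \<tau> :: "complex^'n \<Rightarrow> complex^'n"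
  assumes rf: "real_form br S" and inv: "lie_involution br S \<tau>"
begin

lemma t_in: "x \<in> S \<Longrightarrow> \<tau> x \<in> S" using inv by (simp add: lie_involution_def)
lemma t_add: "x \<in> S \<Longrightarrow> y \<in> S \<Longrightarrow> \<tau> (x + y) = \<tau> x + \<tau> y" using inv by (simp add: lie_involution_def)
lemma t_sR: "x \<in> S \<Longrightarrow> \<tau> (r *\<^sub>R x) = r *\<^sub>R \<tau> x" using inv by (simp add: lie_involution_def)
lemma t_br: "x \<in> S \<Longrightarrow> y \<in> S \<Longrightarrow> \<tau> (br x y) = br (\<tau> x) (\<tau> y)" using inv by (simp add: lie_involution_def)
lemma t_inv: "x \<in> S \<Longrightarrow> \<tau> (\<tau> x) = x" using inv by (simp add: lie_involution_def)
lemma t_0: "\<tau> 0 = 0" using t_sR[of 0 0] subspace_0[OF rf_sub[OF rf]] by simp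
lemma t_neg: "x \<in> S \<Longrightarrow> \<tau> (- x) = - \<tau> x" using t_sR[of x "-1"] by simp
lemma t_diff: "x \<in> S \<Longrightarrow> y \<in> S \<Longrightarrow> \<tau> (x - y) = \<tau> x - \<tau> y"
  using t_add[of x "-y"] t_neg[of y] subspace_neg[OF rf_sub[OF rf]] by simp

lemmas S_ops = subspace_add[OF rf_sub[OF rf]] subspace_diff[OF rf_sub[OF rf]] subspace_neg[OF rf_sub[OF rf]]
   subspace_scale[OF rf_sub[OF rf]] subspace_0[OF rf_sub[OF rf]] rf_brc[OF rf] t_in rf_dec(1,2)[OF rf]

lemma tw_mem: "v \<in> tw S \<tau> \<longleftrightarrow> \<tau> (rfre S v) = rfre S v \<and> \<tau> (rfim S v) = - rfim S v"
proof
  assume "v \<in> tw S \<tau>"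
  then obtain x y where "x \<in> S" "\<tau> x = x" "y \<in> S" "\<tau> y = - y" "v = x + \<i> *s y"
    by (auto simp: tw_def)
  then show "\<tau> (rfre S v) = rfre S v \<and> \<tau> (rfim S v) = - rfim S v" using rf_uniq[OF rf] by auto
next
  assume "\<tau> (rfre S v) = rfre S v \<and> \<tau> (rfim S v) = - rfim S v"
  then show "v \<in> tw S \<tau>" unfolding tw_def using rf_dec[OF rf, of v] by blast
qed

lemma tw_memI: "x \<in> S \<Longrightarrow> \<tau> x = x \<Longrightarrow> y \<in> S \<Longrightarrow> \<tau> y = - y \<Longrightarrow> x + \<i> *s y \<in> tw S \<tau>"
  unfolding tw_def by blast

lemma tw_sub: "subspace (tw S \<tau>)"
  unfolding subspace_def
proof (intro conjI ballI allI)
  show "0 \<in> tw S \<tau>" using tw_memI[of 0 0] by (simp add: t_0 S_ops)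
  fix x y assume "x \<in> tw S \<tau>" "y \<in> tw S \<tau>"
  then show "x + y \<in> tw S \<tau>" unfolding tw_mem by (simp add: rf_add[OF rf] t_add S_ops)
next
  fix c x assume "x \<in> tw S \<tau>"
  then show "c *\<^sub>R x \<in> tw S \<tau>" unfolding tw_mem by (simp add: rf_scaleR[OF rf] t_sR S_ops)
qed

lemma tw_brc: "u \<in> tw S \<tau> \<Longrightarrow> v \<in> tw S \<tau> \<Longrightarrow> br u v \<in> tw S \<tau>"
  unfolding tw_mem by (simp add: rf_br[OF rf] t_add t_diff t_br S_ops)

lemma tw_S1: "x \<in> S \<Longrightarrow> \<tau> x = x \<Longrightarrow> x \<in> tw S \<tau>"
  unfolding tw_mem using rf by (simp add: t_0)
lemma tw_S2: "y \<in> S \<Longrightarrow> \<tau> y = - y \<Longrightarrow> \<i> *s y \<in> tw S \<tau>"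
  unfolding tw_mem using rf by (simp add: t_0)

lemma tw_unique:
  assumes X: "X \<in> tw S \<tau>" and Y: "Y \<in> tw S \<tau>" and v: "v = X + \<i> *s Y"
  shows "rfre S X = (1/2) *\<^sub>R (rfre S v + \<tau> (rfre S v))"
    and "rfim S X = (1/2) *\<^sub>R (rfim S v - \<tau> (rfim S v))"
proof -
  have X': "\<tau> (rfre S X) = rfre S X" "\<tau> (rfim S X) = - rfim S X" using X tw_mem by auto
  have Y': "\<tau> (rfre S Y) = rfre S Y" "\<tau> (rfim S Y) = - rfim S Y" using Y tw_mem by auto
  have r: "rfre S v = rfre S X - rfim S Y" and i: "rfim S v = rfim S X + rfre S Y"
    using v by (simp_all add: rf_add[OF rf] rf_i[OF rf])
  have "\<tau> (rfre S v) = rfre S X + rfim S Y"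
    using r X' Y' by (simp add: t_diff S_ops)
  with r show "rfre S X = (1/2) *\<^sub>R (rfre S v + \<tau> (rfre S v))"
    by (simp add: vec_eq_iff cplx_sR field_simps)
  have "\<tau> (rfim S v) = - rfim S X + rfre S Y"
    using i X' Y' by (simp add: t_add S_ops)
  with i have "rfim S v - \<tau> (rfim S v) = 2 *\<^sub>R rfim S X"
    by (simp add: scaleR_2 algebra_simps)
  then show "rfim S X = (1/2) *\<^sub>R (rfim S v - \<tau> (rfim S v))"
    by simp
qed

lemma tw_rf: "real_form br (tw S \<tau>)"
proof -
  have ex: "\<exists>!p. fst p \<in> tw S \<tau> \<and> snd p \<in> tw S \<tau> \<and> v = fst p + \<i> *s snd p" for v
  proof
    define p q where "p = rfre S v" "q = rfim S v"
    have pq: "p \<in> S" "q \<in> S" using rf_dec[OF rf] p_q_def by auto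
    define X where "X = (1/2) *\<^sub>R (p + \<tau> p) + \<i> *s ((1/2) *\<^sub>R (q - \<tau> q))"
    define Y where "Y = (1/2) *\<^sub>R (q + \<tau> q) - \<i> *s ((1/2) *\<^sub>R (p - \<tau> p))"
    have XS: "(1/2) *\<^sub>R (p + \<tau> p) \<in> S" "(1/2) *\<^sub>R (q - \<tau> q) \<in> S"
      "(1/2) *\<^sub>R (q + \<tau> q) \<in> S" "- ((1/2) *\<^sub>R (p - \<tau> p)) \<in> S" using pq by (simp_all add: S_ops)
    have Xm: "X \<in> tw S \<tau>" unfolding X_def
      by (rule tw_memI) (use XS pq in \<open>simp_all add: t_add t_diff t_sR t_inv S_ops algebra_simps\<close>)
    have Y': "Y = (1/2) *\<^sub>R (q + \<tau> q) + \<i> *s (- ((1/2) *\<^sub>R (p - \<tau> p)))"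
      unfolding Y_def by simp
    have Ym: "Y \<in> tw S \<tau>" unfolding Y'
      by (rule tw_memI) (use XS pq in \<open>simp_all add: t_add t_diff t_sR t_inv t_neg S_ops algebra_simps\<close>)
    have "v = p + \<i> *s q" using rf_dec[OF rf] p_q_def by auto
    also have "\<dots> = X + \<i> *s Y" unfolding X_def Y_def
      by (simp add: vec_eq_iff cplx_sR field_simps)
    finally have "v = X + \<i> *s Y" .
    then show "fst (X, Y) \<in> tw S \<tau> \<and> snd (X, Y) \<in> tw S \<tau> \<and> v = fst (X, Y) + \<i> *s snd (X, Y)"
      using Xm Ym by simp
    fix P assume P: "fst P \<in> tw S \<tau> \<and> snd P \<in> tw S \<tau> \<and> v = fst P + \<i> *s snd P"
    have "v = X + \<i> *s Y" by fact
    have f: "fst P = X"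
      by (rule rf_eqI[OF rf]) (use tw_unique[of "fst P" "snd P" v] tw_unique[OF Xm Ym \<open>v = X + \<i> *s Y\<close>] P in simp_all)
    have "\<i> *s snd P = \<i> *s Y" using P f \<open>v = X + \<i> *s Y\<close> by simp
    then have "\<i> *s (\<i> *s snd P) = \<i> *s (\<i> *s Y)" by simp
    then have "snd P = Y" by simp
    with f show "P = (X, Y)" by (simp add: prod_eq_iff)
  qed
  show ?thesis unfolding real_form_def using ex tw_sub tw_brc by blast
qed

lemma tw_cj_mem: "v \<in> tw S \<tau> \<Longrightarrow> cj S v \<in> tw S \<tau>"
  unfolding tw_mem by (simp add: cj_re[OF rf] cj_im[OF rf] t_neg S_ops)

lemma tw_cj_inv: "lie_involution br (tw S \<tau>) (cj S)"
  unfolding lie_involution_def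
  by (simp add: tw_cj_mem cj_add[OF rf] cj_scaleR[OF rf] cj_br[OF rf] cj_cj[OF rf])

lemma tw_back: "tw (tw S \<tau>) (cj S) = S"
proof
  show "tw (tw S \<tau>) (cj S) \<subseteq> S"
  proof
    fix v assume "v \<in> tw (tw S \<tau>) (cj S)"
    then obtain x y where xy: "x \<in> tw S \<tau>" "cj S x = x" "y \<in> tw S \<tau>" "cj S y = - y" "v = x + \<i> *s y"
      unfolding tw_def by blast
    have "rfim S x = - rfim S x" using arg_cong[OF xy(2), of "rfim S"] by (simp add: cj_im[OF rf])
    then have x0: "rfim S x = 0" by (simp add: eq_neg_iff_add_eq_0 scaleR_2[symmetric])
    have "rfre S y = - rfre S y" using arg_cong[OF xy(4), of "rfre S"] by (simp add: cj_re[OF rf] rf_neg[OF rf])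
    then have y0: "rfre S y = 0" by (simp add: eq_neg_iff_add_eq_0 scaleR_2[symmetric])
    have "x = rfre S x" using rf_dec(3)[OF rf, of x] x0 by simp
    moreover have "y = \<i> *s rfim S y" using rf_dec(3)[OF rf, of y] y0 by simp
    ultimately have "v = rfre S x - rfim S y" using xy(5) by (metis ii_vec diff_conv_add_uminus)
    then show "v \<in> S" by (simp add: S_ops)
  qed
next
  show "S \<subseteq> tw (tw S \<tau>) (cj S)"
  proof
    fix s assume s: "s \<in> S"
    define a b where "a = (1/2) *\<^sub>R (s + \<tau> s)" "b = (1/2) *\<^sub>R (s - \<tau> s)"
    have ab: "a \<in> S" "b \<in> S" "\<tau> a = a" "\<tau> b = - b" using s
      by (simp_all add: a_b_def S_ops t_add t_diff t_sR t_inv algebra_simps)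
    have "a \<in> tw S \<tau>" using tw_S1 ab by simp
    moreover have "\<i> *s (- b) \<in> tw S \<tau>" using tw_S2[of "- b"] ab by (simp add: t_neg S_ops)
    moreover have "cj S a = a" using ab by (simp add: cj_S[OF rf])
    moreover have "cj S (\<i> *s (- b)) = - (\<i> *s (- b))" using ab by (simp add: cj_iS[OF rf] cj_neg[OF rf] S_ops)
    moreover have "s = a + \<i> *s (\<i> *s (- b))" unfolding a_b_def
      by (simp add: vec_eq_iff cplx_sR field_simps)
    ultimately show "s \<in> tw (tw S \<tau>) (cj S)" unfolding tw_def by blast
  qed
qed

lemma tw_cj_S: assumes s: "s \<in> S" shows "cj (tw S \<tau>) s = \<tau> s"
proof -
  define a b where "a = (1/2) *\<^sub>R (s + \<tau> s)" "b = (1/2) *\<^sub>R (s - \<tau> s)"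
  have ab: "a \<in> S" "b \<in> S" "\<tau> a = a" "\<tau> b = - b" using s
    by (simp_all add: a_b_def S_ops t_add t_diff t_sR t_inv algebra_simps)
  have A: "a \<in> tw S \<tau>" using tw_S1 ab by simp
  have B: "\<i> *s (- b) \<in> tw S \<tau>" using tw_S2[of "- b"] ab by (simp add: t_neg S_ops)
  have e: "s = a + \<i> *s (\<i> *s (- b))" unfolding a_b_def
    by (simp add: vec_eq_iff cplx_sR field_simps)
  have "cj (tw S \<tau>) s = a - \<i> *s (\<i> *s (- b))"
    unfolding cj_def using rf_uniq[OF tw_rf A B e] by simp
  also have "\<dots> = \<tau> s" unfolding a_b_def using s
    by (simp add: vec_eq_iff cplx_sR field_simps)
  finally show ?thesis .
qed

end
end

definition trB :: "(complex^'n) set \<Rightarrow> (complex^'n \<Rightarrow> complex^'n) \<Rightarrow> real" where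
  "trB B f = (\<Sum>b\<in>B. representation B (f b) b)"

lemma repr_sum_basis:
  assumes B: "independent (B::(complex^'n) set)" and C: "C \<subseteq> B"
  shows "representation B (\<Sum>c\<in>C. a c *\<^sub>R c) x = (if x \<in> C then a x else 0)"
proof -
  have fin: "finite C" using finiteI_independent[OF B] C finite_subset by blast
  have "representation B (\<Sum>c\<in>C. a c *\<^sub>R c) x = (\<Sum>c\<in>C. representation B (a c *\<^sub>R c) x)"
    by (subst representation_sum[OF B]) (use C in \<open>auto intro: span_scale span_base\<close>)
  also have "\<dots> = (\<Sum>c\<in>C. a c * (if x = c then 1 else 0))"
    by (rule sum.cong) (use C in \<open>auto simp: representation_scale[OF B] span_base representation_basis[OF B]\<close>)
  also have "\<dots> = (if x \<in> C then a x else 0)"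
    using fin by (simp add: if_distrib[of "\<lambda>t. _ * t"] sum.delta cong: if_cong)
  finally show ?thesis .
qed

lemma expand_basis:
  assumes B: "independent (B::(complex^'n) set)" and v: "v \<in> span B"
  shows "(\<Sum>b\<in>B. representation B v b *\<^sub>R b) = v"
  by (rule sum_representation_eq[OF B v finiteI_independent[OF B] order_refl])

lemma repr_linear_image:
  assumes B: "independent (B::(complex^'n) set)" and v: "v \<in> span B" and f: "linear f"
    and fB: "\<And>b. b \<in> B \<Longrightarrow> f b \<in> span C" and C: "independent (C::(complex^'n) set)"
  shows "representation C (f v) x = (\<Sum>b\<in>B. representation B v b * representation C (f b) x)"
proof -
  have "f v = f (\<Sum>b\<in>B. representation B v b *\<^sub>R b)" using expand_basis[OF B v] by simp
  also have "\<dots> = (\<Sum>b\<in>B. representation B v b *\<^sub>R f b)"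
    by (simp add: linear_sum[OF f] linear_cmul[OF f])
  finally have e: "f v = (\<Sum>b\<in>B. representation B v b *\<^sub>R f b)" .
  show ?thesis unfolding e
    by (subst representation_sum[OF C]) (auto intro: span_scale fB simp: representation_scale[OF C] fB)
qed

lemma trB_indep:
  assumes B: "independent (B::(complex^'n) set)" and C: "independent C" and sp: "span B = span C"
    and f: "linear f" and fS: "\<And>v. v \<in> span B \<Longrightarrow> f v \<in> span B"
  shows "trB B f = trB C f"
proof -
  let ?R = "representation B" and ?Q = "representation C"
  have finB: "finite B" and finC: "finite C" using finiteI_independent B C by auto
  have fB: "b \<in> B \<Longrightarrow> f b \<in> span C" for b using fS[of b] span_base[of b B] sp by auto
  have fC: "c \<in> C \<Longrightarrow> f c \<in> span C" for c using fS[of c] span_base[of c C] sp by auto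
  have cB: "c \<in> C \<Longrightarrow> c \<in> span B" for c using span_base[of c C] sp by auto
  have "trB C f = (\<Sum>c\<in>C. \<Sum>b\<in>B. ?R c b * ?Q (f b) c)"
    unfolding trB_def by (rule sum.cong[OF refl]) (rule repr_linear_image[OF B cB f fB C])
  also have "\<dots> = (\<Sum>c\<in>C. \<Sum>b\<in>B. ?R c b * (\<Sum>b'\<in>B. ?R (f b) b' * ?Q b' c))"
  proof -
    have "?Q (f b) c = (\<Sum>b'\<in>B. ?R (f b) b' * ?Q b' c)" if "b \<in> B" for b c
    proof -
      have "f b \<in> span B" using fS span_base that by blast
      from repr_linear_image[OF B this linear_id _ C] show ?thesis
        using sp span_base by (auto simp: id_def)
    qed
    then show ?thesis by (intro sum.cong refl) simp
  qed
  also have "\<dots> = (\<Sum>b\<in>B. \<Sum>b'\<in>B. ?R (f b) b' * (\<Sum>c\<in>C. ?Q b' c * ?R c b))"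
  proof -
    have "(\<Sum>c\<in>C. \<Sum>b\<in>B. ?R c b * (\<Sum>b'\<in>B. ?R (f b) b' * ?Q b' c))
        = (\<Sum>c\<in>C. \<Sum>b\<in>B. \<Sum>b'\<in>B. ?R c b * ?R (f b) b' * ?Q b' c)"
      by (simp add: sum_distrib_left mult.assoc)
    also have "\<dots> = (\<Sum>b\<in>B. \<Sum>c\<in>C. \<Sum>b'\<in>B. ?R c b * ?R (f b) b' * ?Q b' c)"
      by (rule sum.swap)
    also have "\<dots> = (\<Sum>b\<in>B. \<Sum>b'\<in>B. \<Sum>c\<in>C. ?R c b * ?R (f b) b' * ?Q b' c)"
      by (intro sum.cong refl sum.swap)
    also have "\<dots> = (\<Sum>b\<in>B. \<Sum>b'\<in>B. ?R (f b) b' * (\<Sum>c\<in>C. ?Q b' c * ?R c b))"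
      by (simp add: sum_distrib_left mult_ac)
    finally show ?thesis .
  qed
  also have "\<dots> = (\<Sum>b\<in>B. \<Sum>b'\<in>B. ?R (f b) b' * (if b = b' then 1 else 0))"
  proof -
    have "(\<Sum>c\<in>C. ?Q b' c * ?R c b) = (if b = b' then 1 else 0)" if "b \<in> B" "b' \<in> B" for b b'
    proof -
      have "b' \<in> span C" using sp span_base that by blast
      from repr_linear_image[OF C this linear_id _ B] have
        "?R b' b = (\<Sum>c\<in>C. ?Q b' c * ?R c b)" using sp span_base by (auto simp: id_def)
      then show ?thesis using representation_basis[OF B that(2)] by simp
    qed
    then show ?thesis by (intro sum.cong refl) simp
  qed
  also have "\<dots> = trB B f"
  proof -
    have e: "(x::real) * (if b = b' then 1 else 0) = (if b' = b then x else 0)" for x and b b' :: "complex^'n"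
      by auto
    show ?thesis unfolding e using finB by (simp add: sum.delta trB_def)
  qed
  finally show ?thesis by simp
qed

lemma basis_of_subspace:
  assumes "subspace (S::(complex^'n) set)"
  obtains B where "independent B" "span B = S"
proof -
  obtain B where B: "B \<subseteq> S" "independent B" "S \<subseteq> span B" by (rule basis_exists[of S])
  have "span B \<subseteq> S" by (rule span_minimal[OF B(1) assms])
  with B(3) have "span B = S" by blast
  from that[OF B(2) this] show ?thesis .
qed

lemma trace_on_trB:
  assumes B: "independent (B::(complex^'n) set)" and S: "span B = S" and f: "linear f"
    and fS: "\<And>v. v \<in> S \<Longrightarrow> f v \<in> S"
  shows "trace_on S f = trB B f"
proof -
  let ?B = "SOME B. independent B \<and> span B = S"
  have B': "independent ?B \<and> span ?B = S" by (rule someI_ex) (use B S in blast)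
  have "trace_on S f = trB ?B f" by (simp add: trace_on_def trB_def Let_def)
  also have "\<dots> = trB B f"
  proof (rule trB_indep)
    show "independent ?B" "independent B" "linear f" using B' B f by simp_all
    show "span ?B = span B" using B' S by simp
    show "f v \<in> span ?B" if "v \<in> span ?B" for v using that B' fS by simp
  qed
  finally show ?thesis .
qed

lemma trB_add:
  assumes B: "independent (B::(complex^'n) set)" and "\<And>b. b \<in> B \<Longrightarrow> f b \<in> span B" "\<And>b. b \<in> B \<Longrightarrow> g b \<in> span B"
  shows "trB B (\<lambda>v. f v + g v) = trB B f + trB B g"
  unfolding trB_def by (simp add: representation_add[OF B] assms sum.distrib)

lemma trB_scale:
  assumes B: "independent (B::(complex^'n) set)" and "\<And>b. b \<in> B \<Longrightarrow> f b \<in> span B"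
  shows "trB B (\<lambda>v. r *\<^sub>R f v) = r * trB B f"
  unfolding trB_def by (simp add: representation_scale[OF B] assms sum_distrib_left)

lemma trB_cyc:
  assumes B: "independent (B::(complex^'n) set)" and f: "linear f" and g: "linear g"
    and fB: "\<And>v. v \<in> span B \<Longrightarrow> f v \<in> span B" and gB: "\<And>v. v \<in> span B \<Longrightarrow> g v \<in> span B"
  shows "trB B (\<lambda>v. f (g v)) = trB B (\<lambda>v. g (f v))"
proof -
  let ?R = "representation B"
  have 1: "?R (f (g b)) b = (\<Sum>c\<in>B. ?R (g b) c * ?R (f c) b)" if "b \<in> B" for b
    by (rule repr_linear_image[OF B gB[OF span_base[OF that]] f fB[OF span_base] B])
  have 2: "?R (g (f b)) b = (\<Sum>c\<in>B. ?R (f b) c * ?R (g c) b)" if "b \<in> B" for b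
    by (rule repr_linear_image[OF B fB[OF span_base[OF that]] g gB[OF span_base] B])
  have "trB B (\<lambda>v. f (g v)) = (\<Sum>b\<in>B. \<Sum>c\<in>B. ?R (g b) c * ?R (f c) b)"
    unfolding trB_def by (rule sum.cong) (simp_all add: 1)
  also have "\<dots> = (\<Sum>c\<in>B. \<Sum>b\<in>B. ?R (g b) c * ?R (f c) b)" by (rule sum.swap)
  also have "\<dots> = trB B (\<lambda>v. g (f v))"
    unfolding trB_def by (rule sum.cong) (simp_all add: 2 mult.commute)
  finally show ?thesis .
qed

context
  fixes S :: "(complex^'n) set"
  assumes S: "subspace S"
begin

lemma trace_add:
  assumes "linear f" "linear g" "\<And>v. v \<in> S \<Longrightarrow> f v \<in> S" "\<And>v. v \<in> S \<Longrightarrow> g v \<in> S"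
  shows "trace_on S (\<lambda>v. f v + g v) = trace_on S f + trace_on S g"
proof -
  obtain B where B: "independent B" "span B = S" using basis_of_subspace[OF S] by blast
  have l: "linear (\<lambda>v. f v + g v)" using assms(1,2) by (rule linear_compose_add)
  show ?thesis
    using trace_on_trB[OF B l] trace_on_trB[OF B assms(1)] trace_on_trB[OF B assms(2)]
      trB_add[OF B(1), of f g] assms(3,4) B(2) span_base subspace_add[OF S]
    by (metis (no_types, lifting))
qed

lemma trace_scale:
  assumes "linear f" "\<And>v. v \<in> S \<Longrightarrow> f v \<in> S"
  shows "trace_on S (\<lambda>v. r *\<^sub>R f v) = r * trace_on S f"
proof -
  obtain B where B: "independent B" "span B = S" using basis_of_subspace[OF S] by blast
  have l: "linear (\<lambda>v. r *\<^sub>R f v)" using assms(1) by (rule linear_compose_scale_right)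
  show ?thesis
    using trace_on_trB[OF B l] trace_on_trB[OF B assms(1)]
      trB_scale[OF B(1), of f r] assms(2) B(2) span_base subspace_scale[OF S]
    by (metis (no_types, lifting))
qed

lemma trace_cong:
  assumes "\<And>v. f v = g v"
  shows "trace_on S f = trace_on S g"
  using assms by (metis ext)

lemma trace_neg:
  assumes "linear f" "\<And>v. v \<in> S \<Longrightarrow> f v \<in> S"
  shows "trace_on S (\<lambda>v. - f v) = - trace_on S f"
  using trace_scale[OF assms, of "-1"] by simp

lemma trace_diff:
  assumes "linear f" "linear g" "\<And>v. v \<in> S \<Longrightarrow> f v \<in> S" "\<And>v. v \<in> S \<Longrightarrow> g v \<in> S"
  shows "trace_on S (\<lambda>v. f v - g v) = trace_on S f - trace_on S g"
proof -
  have "linear (\<lambda>v. - g v)" using assms(2) by (rule linear_compose_neg)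
  then have "trace_on S (\<lambda>v. f v + - g v) = trace_on S f + trace_on S (\<lambda>v. - g v)"
    using trace_add[OF assms(1) _ assms(3)] assms(4) subspace_neg[OF S] by blast
  then show ?thesis using trace_neg[OF assms(2,4)] by simp
qed

lemma trace_cyc:
  assumes "linear f" "linear g" "\<And>v. v \<in> S \<Longrightarrow> f v \<in> S" "\<And>v. v \<in> S \<Longrightarrow> g v \<in> S"
  shows "trace_on S (\<lambda>v. f (g v)) = trace_on S (\<lambda>v. g (f v))"
proof -
  obtain B where B: "independent B" "span B = S" using basis_of_subspace[OF S] by blast
  have l1: "linear (\<lambda>v. f (g v))" using linear_compose[OF assms(2,1)] by (simp add: o_def)
  have l2: "linear (\<lambda>v. g (f v))" using linear_compose[OF assms(1,2)] by (simp add: o_def)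
  show ?thesis
    using trace_on_trB[OF B l1] trace_on_trB[OF B l2] trB_cyc[OF B(1) assms(1,2)] assms(3,4) B(2)
    by auto
qed

lemma trace_zero: "trace_on S (\<lambda>v. 0) = 0"
  using trace_scale[of "\<lambda>v. 0" 0] subspace_0[OF S] linear_zero by simp

end

lemma lin_i: "linear (\<lambda>x::complex^'n. \<i> *s x)"
  by (rule linearI) simp_all

lemma inj_i: "inj (\<lambda>x::complex^'n. \<i> *s x)"
  by (rule injI) (metis ii_vec minus_equation_iff)

lemma smult_sum: "(c::complex) *s (\<Sum>x\<in>A. f x) = (\<Sum>x\<in>A. c *s (f x::complex^'n))"
  by (induct A rule: infinite_finite_induct) simp_all

lemma repr_sum_img:
  assumes B: "independent (B::(complex^'n) set)" and C: "g ` C \<subseteq> B" and inj: "inj_on g C"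
  shows "representation B (\<Sum>c\<in>C. a c *\<^sub>R g c) y = (if y \<in> g ` C then a (inv_into C g y) else 0)"
proof -
  have "(\<Sum>c\<in>C. a c *\<^sub>R g c) = (\<Sum>d\<in>g ` C. a (inv_into C g d) *\<^sub>R d)"
    by (subst sum.reindex[OF inj]) (simp add: inv_into_f_f[OF inj])
  then show ?thesis using repr_sum_basis[OF B C] by simp
qed

lemma repr_sum_img_at:
  assumes B: "independent (B::(complex^'n) set)" and C: "g ` C \<subseteq> B" and inj: "inj_on g C" and x: "x \<in> C"
  shows "representation B (\<Sum>c\<in>C. a c *\<^sub>R g c) (g x) = a x"
  using repr_sum_img[OF B C inj, of a "g x"] x inv_into_f_f[OF inj x] by simp

context
  fixes br :: "complex^'n \<Rightarrow> complex^'n \<Rightarrow> complex^'n" and S :: "(complex^'n) set"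
    and B :: "(complex^'n) set"
  assumes rf: "real_form br S" and B: "independent B" "span B = S"
begin

definition "B2 = B \<union> (\<lambda>x. \<i> *s x) ` B"

lemma B2_disj: "B \<inter> (\<lambda>x. \<i> *s x) ` B = {}"
proof (rule ccontr)
  assume "B \<inter> (\<lambda>x. \<i> *s x) ` B \<noteq> {}"
  then obtain c where c: "c \<in> B" "\<i> *s c \<in> B" by auto
  then have "c \<in> S" "\<i> *s c \<in> S" using B span_base by blast+
  then have "c = 0" by (rule rf_SiS[OF rf])
  with c B(1) dependent_zero show False by blast
qed

lemma B2_fin: "finite B" "finite B2"
  using finiteI_independent[OF B(1)] by (auto simp: B2_def)

lemma B2_sum: "(\<Sum>x\<in>B2. h x) = (\<Sum>x\<in>B. h x) + (\<Sum>x\<in>B. h (\<i> *s x))"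
  unfolding B2_def
  by (subst sum.union_disjoint) (use B2_fin B2_disj in \<open>auto simp: sum.reindex[OF inj_on_subset[OF inj_i]]\<close>)

lemma B2_indep: "independent B2"
proof -
  have "(\<Sum>v\<in>B2. c v *\<^sub>R v) = 0 \<longrightarrow> (\<forall>v\<in>B2. c v = 0)" for c
  proof
    assume z: "(\<Sum>v\<in>B2. c v *\<^sub>R v) = 0"
    define x y where "x = (\<Sum>v\<in>B. c v *\<^sub>R v)" "y = (\<Sum>v\<in>B. c (\<i> *s v) *\<^sub>R v)"
    have "x \<in> span B" "y \<in> span B" unfolding x_y_def
      by (auto intro!: span_sum span_scale intro: span_base)
    then have xy: "x \<in> S" "y \<in> S" using B(2) by auto
    have "0 = x + \<i> *s y" using z unfolding B2_sum x_y_def by (simp add: smult_sum)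
    then have "rfre S 0 = x" "rfim S 0 = y" using rf_uniq[OF rf xy] by auto
    then have "x = 0" "y = 0" using rf_S[OF rf, of 0] subspace_0[OF rf_sub[OF rf]] by auto
    then have "\<forall>v\<in>B. c v = 0" "\<forall>v\<in>B. c (\<i> *s v) = 0"
      using B(1) B2_fin(1) unfolding x_y_def independent_explicit by auto
    then show "\<forall>v\<in>B2. c v = 0" unfolding B2_def by auto
  qed
  then show ?thesis unfolding independent_explicit using B2_fin by blast
qed

lemma B2_span: "span B2 = UNIV"
proof -
  have "v \<in> span B2" for v
  proof -
    have "rfre S v \<in> span B" using rf_dec[OF rf] B by auto
    then have 1: "rfre S v \<in> span B2" using span_mono[of B B2] by (auto simp: B2_def)
    have "\<i> *s rfim S v \<in> (\<lambda>x. \<i> *s x) ` span B" using rf_dec[OF rf] B by auto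
    then have "\<i> *s rfim S v \<in> span ((\<lambda>x. \<i> *s x) ` B)" using span_linear_image[OF lin_i] by auto
    then have 2: "\<i> *s rfim S v \<in> span B2" using span_mono[of "(\<lambda>x. \<i> *s x) ` B" B2] by (auto simp: B2_def)
    show ?thesis using span_add[OF 1 2] rf_dec(3)[OF rf, of v] by simp
  qed
  then show ?thesis by auto
qed

lemma fexp:
  assumes "v \<in> S"
  shows "v = (\<Sum>c\<in>B. representation B v c *\<^sub>R c)"
    "\<i> *s v = (\<Sum>c\<in>B. representation B v c *\<^sub>R (\<i> *s c))"
proof -
  show e: "v = (\<Sum>c\<in>B. representation B v c *\<^sub>R c)" using expand_basis[OF B(1), of v] assms B(2) by auto
  have "\<i> *s v = \<i> *s (\<Sum>c\<in>B. representation B v c *\<^sub>R c)" using e by metis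
  then show "\<i> *s v = (\<Sum>c\<in>B. representation B v c *\<^sub>R (\<i> *s c))" by (simp add: smult_sum)
qed

lemma trace_double:
  assumes f: "linear f" and fi: "\<And>v. f (\<i> *s v) = \<i> *s f v" and fS: "\<And>v. v \<in> S \<Longrightarrow> f v \<in> S"
  shows "trace_on UNIV f = 2 * trace_on S f"
proof -
  have "trace_on UNIV f = trB B2 f" by (rule trace_on_trB[OF B2_indep B2_span f]) simp
  also have "\<dots> = (\<Sum>x\<in>B. representation B2 (f x) x) + (\<Sum>x\<in>B. representation B2 (f (\<i> *s x)) (\<i> *s x))"
    unfolding trB_def B2_sum ..
  also have "\<dots> = (\<Sum>x\<in>B. representation B (f x) x) + (\<Sum>x\<in>B. representation B (f x) x)"
  proof -
    have fx: "f x \<in> S" if "x \<in> B" for x using fS span_base B that by blast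
    have 1: "representation B2 (f x) x = representation B (f x) x" if "x \<in> B" for x
      using repr_sum_img_at[OF B2_indep _ inj_on_id, where C=B and x=x and a="representation B (f x)"] that fexp(1)[OF fx[OF that]]
      by (auto simp: B2_def)
    have 2: "representation B2 (f (\<i> *s x)) (\<i> *s x) = representation B (f x) x" if "x \<in> B" for x
      using repr_sum_img_at[OF B2_indep _ inj_on_subset[OF inj_i], where C=B and x=x and a="representation B (f x)"]
        that fexp(2)[OF fx[OF that]] fi
      by (auto simp: B2_def)
    show ?thesis using 1 2 by simp
  qed
  also have "\<dots> = 2 * trB B f" unfolding trB_def by simp
  also have "\<dots> = 2 * trace_on S f" using trace_on_trB[OF B f fS] by simp
  finally show ?thesis .
qed

lemma trace_anti:
  assumes f: "linear f" and fi: "\<And>v. f (\<i> *s v) = \<i> *s f v" and fS: "\<And>v. v \<in> S \<Longrightarrow> f v \<in> S"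
  shows "trace_on UNIV (\<lambda>v. \<i> *s f v) = 0"
proof -
  have l: "linear (\<lambda>v. \<i> *s f v)" using linear_compose[OF f lin_i] by (simp add: o_def)
  have "trace_on UNIV (\<lambda>v. \<i> *s f v) = trB B2 (\<lambda>v. \<i> *s f v)" by (rule trace_on_trB[OF B2_indep B2_span l]) simp
  also have "\<dots> = (\<Sum>x\<in>B. representation B2 (\<i> *s f x) x) + (\<Sum>x\<in>B. representation B2 (\<i> *s f (\<i> *s x)) (\<i> *s x))"
    unfolding trB_def B2_sum ..
  also have "\<dots> = 0"
  proof -
    have fx: "f x \<in> S" if "x \<in> B" for x using fS span_base B that by blast
    have 1: "representation B2 (\<i> *s f x) x = 0" if "x \<in> B" for x
      using repr_sum_img[OF B2_indep _ inj_on_subset[OF inj_i], where C=B and y=x and a="representation B (f x)"]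
        that fexp(2)[OF fx[OF that]] B2_disj
      by (auto simp: B2_def)
    have 2: "representation B2 (\<i> *s f (\<i> *s x)) (\<i> *s x) = 0" if "x \<in> B" for x
    proof -
      have "\<i> *s f (\<i> *s x) = - (\<Sum>c\<in>B. representation B (f x) c *\<^sub>R id c)"
        using fi fexp(1)[OF fx[OF that]] by simp
      moreover have "representation B2 (\<Sum>c\<in>B. representation B (f x) c *\<^sub>R id c) (\<i> *s x) = 0"
        using repr_sum_img[OF B2_indep _ inj_on_id, where C=B and a="representation B (f x)" and y="\<i> *s x"]
          that B2_disj by (auto simp: B2_def)
      moreover have "(\<Sum>c\<in>B. representation B (f x) c *\<^sub>R id c) \<in> span B2"
        using B2_span by simp
      ultimately show ?thesis using representation_neg[OF B2_indep] by simp
    qed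
    show ?thesis using 1 2 by simp
  qed
  finally show ?thesis .
qed

end

lemma trace_restrict:
  assumes D: "subspace D" and S: "subspace S" and DS: "D \<subseteq> S" and f: "linear f"
    and fSD: "\<And>v. v \<in> S \<Longrightarrow> f v \<in> D"
  shows "trace_on S f = trace_on (D::(complex^'n) set) f"
proof -
  obtain BD where BD: "independent BD" "span BD = D" using basis_of_subspace[OF D] by blast
  have "BD \<subseteq> S" using BD DS span_base by blast
  then obtain BS where BS: "BD \<subseteq> BS" "BS \<subseteq> S" "independent BS" "S \<subseteq> span BS"
    using maximal_independent_subset_extend[OF _ BD(1)] by blast
  have spS: "span BS = S" using BS span_minimal[OF BS(2) S] by blast
  have finS: "finite BS" using finiteI_independent[OF BS(3)] .
  have "trace_on S f = trB BS f" by (rule trace_on_trB[OF BS(3) spS f]) (use fSD DS in blast)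
  also have "\<dots> = (\<Sum>b\<in>BS. if b \<in> BD then representation BD (f b) b else 0)"
    unfolding trB_def
  proof (rule sum.cong[OF refl])
    fix b assume b: "b \<in> BS"
    have "f b \<in> span BD" using fSD BS(2) b BD by blast
    then have "f b = (\<Sum>c\<in>BD. representation BD (f b) c *\<^sub>R id c)" using expand_basis[OF BD(1)] by simp
    then show "representation BS (f b) b = (if b \<in> BD then representation BD (f b) b else 0)"
      using repr_sum_img[OF BS(3) _ inj_on_id, where C=BD and a="representation BD (f b)" and y=b] BS(1) by auto
  qed
  also have "\<dots> = (\<Sum>b\<in>BD. representation BD (f b) b)"
    using finS BS(1) by (simp add: sum.inter_restrict[symmetric] Int_absorb1)
  also have "\<dots> = trace_on D f"
  proof -
    have "trace_on D f = trB BD f" by (rule trace_on_trB[OF BD f]) (use fSD DS in blast)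
    then show ?thesis by (simp add: trB_def)
  qed
  finally show ?thesis .
qed

lemma trace_cong_gen: "(\<And>v. f v = g v) \<Longrightarrow> trace_on S f = trace_on S g"
  by (metis ext)

lemma trace_double_rf:
  assumes rf: "real_form br S" and f: "linear f" and fi: "\<And>v. f (\<i> *s v) = \<i> *s f v"
    and fS: "\<And>v. v \<in> S \<Longrightarrow> f v \<in> S"
  shows "trace_on UNIV f = 2 * trace_on S f"
proof -
  obtain B where B: "independent B" "span B = S" using basis_of_subspace[OF rf_sub[OF rf]] by blast
  show ?thesis by (rule trace_double[OF rf B f fi fS])
qed

lemma trace_anti_rf:
  assumes rf: "real_form br S" and f: "linear f" and fi: "\<And>v. f (\<i> *s v) = \<i> *s f v"
    and fS: "\<And>v. v \<in> S \<Longrightarrow> f v \<in> S"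
  shows "trace_on UNIV (\<lambda>v. \<i> *s f v) = 0"
proof -
  obtain B where B: "independent B" "span B = S" using basis_of_subspace[OF rf_sub[OF rf]] by blast
  show ?thesis by (rule trace_anti[OF rf B f fi fS])
qed

context clie
begin

lemma lin_adad: "linear (\<lambda>v. br x (br y v))"
  using linear_compose[OF lin_r lin_r] by (simp add: o_def)

lemma killing_UNIV_add_l: "killing br UNIV (x1 + x2) y = killing br UNIV x1 y + killing br UNIV x2 y"
  unfolding killing_def using trace_add[OF subspace_UNIV lin_adad lin_adad] by simp
lemma killing_UNIV_add_r: "killing br UNIV x (y1 + y2) = killing br UNIV x y1 + killing br UNIV x y2"
  unfolding killing_def using trace_add[OF subspace_UNIV lin_adad lin_adad] by simp

context
  fixes S assumes S: "subspace S" and SB: "\<And>x y. x \<in> S \<Longrightarrow> y \<in> S \<Longrightarrow> br x y \<in> S"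
begin

lemma adad_S: "x \<in> S \<Longrightarrow> y \<in> S \<Longrightarrow> v \<in> S \<Longrightarrow> br x (br y v) \<in> S"
  using SB by blast

lemma K_add_l: "x1 \<in> S \<Longrightarrow> x2 \<in> S \<Longrightarrow> y \<in> S \<Longrightarrow> killing br S (x1 + x2) y = killing br S x1 y + killing br S x2 y"
  unfolding killing_def using trace_add[OF S lin_adad lin_adad] adad_S by simp
lemma K_add_r: "x \<in> S \<Longrightarrow> y1 \<in> S \<Longrightarrow> y2 \<in> S \<Longrightarrow> killing br S x (y1 + y2) = killing br S x y1 + killing br S x y2"
  unfolding killing_def using trace_add[OF S lin_adad lin_adad] adad_S by simp
lemma K_scale_l: "x \<in> S \<Longrightarrow> y \<in> S \<Longrightarrow> killing br S (r *\<^sub>R x) y = r * killing br S x y"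
  unfolding killing_def using trace_scale[OF S lin_adad] adad_S by simp
lemma K_scale_r: "x \<in> S \<Longrightarrow> y \<in> S \<Longrightarrow> killing br S x (r *\<^sub>R y) = r * killing br S x y"
  unfolding killing_def using trace_scale[OF S lin_adad] adad_S by simp
lemma K_neg_l: "x \<in> S \<Longrightarrow> y \<in> S \<Longrightarrow> killing br S (- x) y = - killing br S x y"
  using K_scale_l[of x y "-1"] by simp
lemma K_neg_r: "x \<in> S \<Longrightarrow> y \<in> S \<Longrightarrow> killing br S x (- y) = - killing br S x y"
  using K_scale_r[of x y "-1"] by simp

end

lemma K_L:
  assumes rf: "real_form br S" and x: "x \<in> S" and y: "y \<in> S"
  shows "killing br UNIV x y = 2 * killing br S x y"
  unfolding killing_def
  by (rule trace_double_rf[OF rf lin_adad]) (use rf_brc[OF rf] x y in auto)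

lemma K_L_i1:
  assumes rf: "real_form br S" and x: "x \<in> S" and y: "y \<in> S"
  shows "killing br UNIV x (\<i> *s y) = 0"
proof -
  have "killing br UNIV x (\<i> *s y) = trace_on UNIV (\<lambda>v. \<i> *s br x (br y v))"
    unfolding killing_def by simp
  also have "\<dots> = 0"
    by (rule trace_anti_rf[OF rf lin_adad]) (use rf_brc[OF rf] x y in auto)
  finally show ?thesis .
qed

lemma K_L_i2:
  assumes rf: "real_form br S" and x: "x \<in> S" and y: "y \<in> S"
  shows "killing br UNIV (\<i> *s x) y = 0"
proof -
  have "killing br UNIV (\<i> *s x) y = trace_on UNIV (\<lambda>v. \<i> *s br x (br y v))"
    unfolding killing_def by simp
  also have "\<dots> = 0"
    by (rule trace_anti_rf[OF rf lin_adad]) (use rf_brc[OF rf] x y in auto)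
  finally show ?thesis .
qed

lemma K_L_ii: "killing br UNIV (\<i> *s x) (\<i> *s y) = - killing br UNIV x y"
proof -
  have "killing br UNIV (\<i> *s x) (\<i> *s y) = trace_on UNIV (\<lambda>v. - br x (br y v))"
    unfolding killing_def by simp
  also have "\<dots> = - killing br UNIV x y"
    unfolding killing_def by (rule trace_neg[OF subspace_UNIV lin_adad]) simp
  finally show ?thesis .
qed

lemma KT:
  assumes rfS: "real_form br S" and rfT: "real_form br T" and x: "x \<in> T" and y: "y \<in> T"
  shows "killing br T x y = killing br S (rfre S x) (rfre S y) - killing br S (rfim S x) (rfim S y)"
proof -
  define a b c d where "a = rfre S x" "b = rfim S x" "c = rfre S y" "d = rfim S y"
  have abcd: "a \<in> S" "b \<in> S" "c \<in> S" "d \<in> S" using rf_dec[OF rfS] a_b_c_d_def by auto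
  have "2 * killing br T x y = killing br UNIV x y" using K_L[OF rfT x y] by simp
  also have "\<dots> = killing br UNIV (a + \<i> *s b) (c + \<i> *s d)"
    using rf_dec(3)[OF rfS, of x] rf_dec(3)[OF rfS, of y] a_b_c_d_def by metis
  also have "\<dots> = killing br UNIV a c + killing br UNIV a (\<i> *s d) + killing br UNIV (\<i> *s b) c
      + killing br UNIV (\<i> *s b) (\<i> *s d)"
    by (simp add: killing_UNIV_add_l killing_UNIV_add_r)
  also have "\<dots> = 2 * killing br S a c - 2 * killing br S b d"
    using K_L[OF rfS] K_L_i1[OF rfS] K_L_i2[OF rfS] K_L_ii abcd by simp
  finally show ?thesis using a_b_c_d_def by simp
qed

lemma K_invar:
  assumes D: "subspace D"
    and w: "\<And>v. v \<in> D \<Longrightarrow> br w v \<in> D" and y: "\<And>v. v \<in> D \<Longrightarrow> br y v \<in> D"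
    and z: "\<And>v. v \<in> D \<Longrightarrow> br z v \<in> D"
  shows "trace_on D (\<lambda>v. br (br w y) (br z v)) = trace_on D (\<lambda>v. br w (br (br y z) v))"
proof -
  have l3: "linear (\<lambda>v. br a (br b (br c v)))" for a b c
    using linear_compose[OF lin_r lin_adad] by (simp add: o_def)
  have "trace_on D (\<lambda>v. br (br w y) (br z v)) = trace_on D (\<lambda>v. br w (br y (br z v)) - br y (br w (br z v)))"
    by (rule trace_cong_gen) (simp add: jac2[of w y])
  also have "\<dots> = trace_on D (\<lambda>v. br w (br y (br z v))) - trace_on D (\<lambda>v. br y (br w (br z v)))"
    by (rule trace_diff[OF D l3 l3]) (use w y z in auto)
  also have "trace_on D (\<lambda>v. br y (br w (br z v))) = trace_on D (\<lambda>v. br w (br z (br y v)))"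
    using trace_cyc[OF D lin_r lin_adad, of y w z] w y z by auto
  also have "trace_on D (\<lambda>v. br w (br y (br z v))) - trace_on D (\<lambda>v. br w (br z (br y v)))
      = trace_on D (\<lambda>v. br w (br y (br z v)) - br w (br z (br y v)))"
    by (rule trace_diff[OF D l3 l3, symmetric]) (use w y z in auto)
  also have "\<dots> = trace_on D (\<lambda>v. br w (br (br y z) v))"
    by (rule trace_cong_gen) (simp add: jac2[of y z])
  finally show ?thesis .
qed

end

definition tauP :: "(complex^'n \<Rightarrow> complex^'n \<Rightarrow> complex^'n) \<Rightarrow> complex^'n \<Rightarrow> complex^'n \<Rightarrow> complex^'n" where
  "tauP br h v = v - 2 *\<^sub>R br h (br h v)"

lemma bl_smult: "bounded_linear (\<lambda>c::complex. c *s (a::complex^'n))"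
proof -
  have "linear (\<lambda>c::complex. c *s a)"
    by (rule linearI) (simp_all add: vector_sadd_rdistrib vec_eq_iff cplx_sR)
  then show ?thesis using linear_conv_bounded_linear by blast
qed

lemma exp_series_vec:
  "(\<lambda>k. (t^k / fact k) *\<^sub>R (w^k *s (a::complex^'n))) sums (exp (complex_of_real t * w) *s a)"
proof -
  have "(\<lambda>k. ((complex_of_real t * w)^k /\<^sub>R fact k) *s a) sums (exp (complex_of_real t * w) *s a)"
    by (rule bounded_linear.sums[OF bl_smult exp_converges])
  moreover have "((complex_of_real t * w)^k /\<^sub>R fact k) *s a = (t^k / fact k) *\<^sub>R (w^k *s a)" for k
    by (simp add: vec_eq_iff cplx_sR power_mult_distrib divide_inverse)
  ultimately show ?thesis by simp
qed

context clie
begin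

lemma funpow_br_add: "(br z ^^ k) (x + y) = (br z ^^ k) x + (br z ^^ k) y"
  by (induct k) simp_all

lemma euler_cube:
  assumes e: "euler_elem br S h" and v: "v \<in> S"
  shows "br h (br h (br h v)) = br h v"
    and "tau_h br S h v = tauP br h v"
proof -
  obtain a b c where abc: "a \<in> eigsp br S h (-1)" "b \<in> eigsp br S h 0" "c \<in> eigsp br S h 1" "v = a + b + c"
    using e v unfolding euler_elem_def by blast
  have A: "br h a = - a" "br h b = 0" "br h c = c" using abc(1-3) by (auto simp: eigsp_def)
  show "br h (br h (br h v)) = br h v" using A abc(4) by simp
  have key: "- a' + b' - c' = tauP br h v" if "a' \<in> eigsp br S h (-1)" "b' \<in> eigsp br S h 0"
      "c' \<in> eigsp br S h 1" "v = a' + b' + c'" for a' b' c'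
  proof -
    have "br h a' = - a'" "br h b' = 0" "br h c' = c'" using that by (auto simp: eigsp_def)
    then show ?thesis using that(4) by (simp add: tauP_def scaleR_2 algebra_simps)
  qed
  show "tau_h br S h v = tauP br h v"
    unfolding tau_h_def
  proof (rule the_equality)
    show "\<exists>a b c. a \<in> eigsp br S h (- 1) \<and> b \<in> eigsp br S h 0 \<and> c \<in> eigsp br S h 1 \<and>
        v = a + b + c \<and> tauP br h v = - a + b - c"
      using abc key by metis
    show "\<And>w. \<exists>a b c. a \<in> eigsp br S h (- 1) \<and> b \<in> eigsp br S h 0 \<and> c \<in> eigsp br S h 1 \<and>
        v = a + b + c \<and> w = - a + b - c \<Longrightarrow> w = tauP br h v"
      using key by metis
  qed
qed

lemma euler_intro:
  assumes S: "subspace S" and h: "h \<in> S" and cl: "\<And>v. v \<in> S \<Longrightarrow> br h v \<in> S"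
    and nz: "\<exists>y\<in>S. br h y \<noteq> 0" and cube: "\<And>v. v \<in> S \<Longrightarrow> br h (br h (br h v)) = br h v"
  shows "euler_elem br S h"
proof -
  have "\<exists>a b c. a \<in> eigsp br S h (-1) \<and> b \<in> eigsp br S h 0 \<and> c \<in> eigsp br S h 1 \<and> v = a + b + c"
    if v: "v \<in> S" for v
  proof (intro exI conjI)
    let ?A = "br h v" and ?A2 = "br h (br h v)"
    have in2: "?A \<in> S" "?A2 \<in> S" using cl v by auto
    show "(1/2) *\<^sub>R (?A2 - ?A) \<in> eigsp br S h (-1)"
      using in2 cube[OF v] by (simp add: eigsp_def subspace_scale[OF S] subspace_diff[OF S] algebra_simps)
    show "v - ?A2 \<in> eigsp br S h 0"
      using in2 v cube[OF v] by (simp add: eigsp_def subspace_diff[OF S])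
    show "(1/2) *\<^sub>R (?A2 + ?A) \<in> eigsp br S h 1"
      using in2 cube[OF v] by (simp add: eigsp_def subspace_scale[OF S] subspace_add[OF S] algebra_simps)
    show "v = (1/2) *\<^sub>R (?A2 - ?A) + (v - ?A2) + (1/2) *\<^sub>R (?A2 + ?A)"
      by (simp add: vec_eq_iff cplx_sR field_simps)
  qed
  then show ?thesis unfolding euler_elem_def using h nz by blast
qed

lemma exp_ad_formula:
  assumes e: "euler_elem br UNIV (\<i> *s z)"
  shows "exp_ad br pi z v = v + 2 *\<^sub>R br z (br z v)"
proof -
  obtain a b c where abc: "a \<in> eigsp br UNIV (\<i> *s z) (-1)" "b \<in> eigsp br UNIV (\<i> *s z) 0"
      "c \<in> eigsp br UNIV (\<i> *s z) 1" "v = a + b + c"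
    using e unfolding euler_elem_def by blast
  have "\<i> *s br z a = - a" "\<i> *s br z b = 0" "\<i> *s br z c = c" using abc(1-3) by (auto simp: eigsp_def)
  then have "(- \<i>) *s (\<i> *s br z a) = (- \<i>) *s (- a)" "(- \<i>) *s (\<i> *s br z b) = 0"
      "(- \<i>) *s (\<i> *s br z c) = (- \<i>) *s c" by simp_all
  then have A: "br z a = \<i> *s a" "br z b = 0" "br z c = (- \<i>) *s c"
    by (simp_all add: vec_eq_iff)
  have pa: "(br z ^^ k) a = (\<i> ^ k) *s a" for k by (induct k) (simp_all add: A mult.commute)
  have pb: "(br z ^^ k) b = (if k = 0 then b else 0)" for k by (induct k) (simp_all add: A)
  have pc: "(br z ^^ k) c = ((- \<i>) ^ k) *s c" for k by (induct k) (simp_all add: A mult.commute)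
  have sa: "(\<lambda>k. (pi^k / fact k) *\<^sub>R (br z ^^ k) a) sums (- a)"
    using exp_series_vec[of pi \<i> a] by (simp add: pa exp_pi_i' mult.commute)
  have "(\<lambda>k. (pi^k / fact k) *\<^sub>R (br z ^^ k) c) sums (exp (complex_of_real pi * (- \<i>)) *s c)"
    using exp_series_vec[of pi "- \<i>" c] by (simp add: pc)
  moreover have "exp (complex_of_real pi * (- \<i>)) = -1"
    by (metis exp_pi_i' exp_minus mult.commute mult_minus_right inverse_minus_eq inverse_1)
  ultimately have sc: "(\<lambda>k. (pi^k / fact k) *\<^sub>R (br z ^^ k) c) sums (- c)" by simp
  have sb: "(\<lambda>k. (pi^k / fact k) *\<^sub>R (br z ^^ k) b) sums b"
  proof -
    have "(\<lambda>k. (pi^k / fact k) *\<^sub>R (br z ^^ k) b) = (\<lambda>k. if k = 0 then b else 0)"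
      by (auto simp: pb)
    then show ?thesis using sums_single[of 0 "\<lambda>_. b"] by simp
  qed
  have "(\<lambda>k. (pi^k / fact k) *\<^sub>R (br z ^^ k) v) sums (- a + b + - c)"
    using sums_add[OF sums_add[OF sa sb] sc] by (simp add: abc(4) funpow_br_add scaleR_add_right)
  then have "exp_ad br pi z v = - a + b - c" unfolding exp_ad_def by (simp add: sums_iff)
  also have "\<dots> = v + 2 *\<^sub>R br z (br z v)"
    by (simp add: abc(4) A vec_eq_iff cplx_sR field_simps)
  finally show ?thesis .
qed

lemma tauP_add: "tauP br h (x + y) = tauP br h x + tauP br h y"
  by (simp add: tauP_def algebra_simps)
lemma tauP_scaleR: "tauP br h (r *\<^sub>R x) = r *\<^sub>R tauP br h x"
  by (simp add: tauP_def algebra_simps)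
lemma tauP_smult: "tauP br h (c *s x) = c *s tauP br h x"
  by (simp add: tauP_def)
lemma tauP_neg: "tauP br h (- x) = - tauP br h x"
  by (simp add: tauP_def)
lemma tauP_diff: "tauP br h (x - y) = tauP br h x - tauP br h y"
  by (simp add: tauP_def algebra_simps)
lemma tauP_lin: "linear (tauP br h)"
  by (rule linearI) (simp_all add: tauP_add tauP_scaleR)
lemma tauP_zero: "tauP br h 0 = 0" by (simp add: tauP_def)

context
  fixes h assumes cube: "\<And>v. br h (br h (br h v)) = br h v"
begin

lemma tauP_inv: "tauP br h (tauP br h v) = v"
  by (simp add: tauP_def cube algebra_simps)

lemma eig_br: "br h u = \<alpha> *\<^sub>R u \<Longrightarrow> br h w = \<beta> *\<^sub>R w \<Longrightarrow> br h (br u w) = (\<alpha> + \<beta>) *\<^sub>R br u w"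
  by (simp add: jac2[of h u w] scaleR_add_left)

lemma eig2_zero: assumes "br h u = \<gamma> *\<^sub>R u" "\<gamma> = 2 \<or> \<gamma> = -2" shows "u = 0"
proof -
  have "br h (br h (br h u)) = (\<gamma>*\<gamma>*\<gamma>) *\<^sub>R u" using assms(1) by simp
  then have "(\<gamma>*\<gamma>*\<gamma>) *\<^sub>R u = \<gamma> *\<^sub>R u" using cube[of u] assms(1) by simp
  then have "(\<gamma>*\<gamma>*\<gamma> - \<gamma>) *\<^sub>R u = 0" by (simp add: scaleR_diff_left)
  moreover have "\<gamma>*\<gamma>*\<gamma> - \<gamma> \<noteq> 0" using assms(2) by auto
  ultimately show ?thesis by simp
qed

lemma eig_tau: "br h u = \<alpha> *\<^sub>R u \<Longrightarrow> tauP br h u = (1 - 2 * \<alpha>\<^sup>2) *\<^sub>R u"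
  by (simp add: tauP_def power2_eq_square algebra_simps)

lemma good_eig:
  assumes u: "br h u = \<alpha> *\<^sub>R u" and w: "br h w = \<beta> *\<^sub>R w"
    and a: "\<alpha> \<in> {-1,0,1}" and b: "\<beta> \<in> {-1,0,1}"
  shows "tauP br h (br u w) = br (tauP br h u) (tauP br h w)"
proof -
  have uw: "br h (br u w) = (\<alpha> + \<beta>) *\<^sub>R br u w" by (rule eig_br[OF u w])
  have rhs: "br (tauP br h u) (tauP br h w) = ((1 - 2 * \<alpha>\<^sup>2) * (1 - 2 * \<beta>\<^sup>2)) *\<^sub>R br u w"
    by (simp add: eig_tau[OF u] eig_tau[OF w])
  show ?thesis
  proof (cases "\<alpha> + \<beta> = 2 \<or> \<alpha> + \<beta> = -2")
    case True
    then have "br u w = 0" using eig2_zero[OF uw] by blast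
    then show ?thesis using rhs by (simp add: tauP_def)
  next
    case False
    then have "1 - 2 * (\<alpha> + \<beta>)\<^sup>2 = (1 - 2 * \<alpha>\<^sup>2) * (1 - 2 * \<beta>\<^sup>2)"
      using a b by (auto simp: power2_eq_square)
    then show ?thesis using eig_tau[OF uw] rhs by simp
  qed
qed

definition "good u w \<longleftrightarrow> tauP br h (br u w) = br (tauP br h u) (tauP br h w)"

lemma good_addL: "good u1 w \<Longrightarrow> good u2 w \<Longrightarrow> good (u1 + u2) w"
  by (simp add: good_def tauP_add)
lemma good_addR: "good u w1 \<Longrightarrow> good u w2 \<Longrightarrow> good u (w1 + w2)"
  by (simp add: good_def tauP_add)

lemma proj_eig:
  "br h ((1/2) *\<^sub>R (br h (br h x) - br h x)) = (-1) *\<^sub>R ((1/2) *\<^sub>R (br h (br h x) - br h x))"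
  "br h (x - br h (br h x)) = 0 *\<^sub>R (x - br h (br h x))"
  "br h ((1/2) *\<^sub>R (br h (br h x) + br h x)) = 1 *\<^sub>R ((1/2) *\<^sub>R (br h (br h x) + br h x))"
  "x = (1/2) *\<^sub>R (br h (br h x) - br h x) + (x - br h (br h x)) + (1/2) *\<^sub>R (br h (br h x) + br h x)"
  by (simp_all add: cube algebra_simps)

lemma good_eig_all: assumes u: "br h u = \<alpha> *\<^sub>R u" and a: "\<alpha> \<in> {-1,0,1}" shows "good u y"
proof -
  note P = proj_eig[of y]
  have "good u ((1/2) *\<^sub>R (br h (br h y) - br h y) + (y - br h (br h y)) + (1/2) *\<^sub>R (br h (br h y) + br h y))"
    by (intro good_addR) (use good_eig[OF u P(1) a] good_eig[OF u P(2) a] good_eig[OF u P(3) a] in \<open>auto simp: good_def\<close>)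
  then show ?thesis using P(4) by metis
qed

lemma tauP_aut: "tauP br h (br x y) = br (tauP br h x) (tauP br h y)"
proof -
  note P = proj_eig[of x]
  have "good ((1/2) *\<^sub>R (br h (br h x) - br h x) + (x - br h (br h x)) + (1/2) *\<^sub>R (br h (br h x) + br h x)) y"
    by (intro good_addL good_eig_all[OF P(1)] good_eig_all[OF P(2)] good_eig_all[OF P(3)]) auto
  then show ?thesis using P(4) unfolding good_def by metis
qed

end

end

definition cx :: "(complex^'n) set \<Rightarrow> (complex^'n) set" where
  "cx X = {a + \<i> *s b | a b. a \<in> X \<and> b \<in> X}"

definition ssum :: "(complex^'n) set \<Rightarrow> (complex^'n) set \<Rightarrow> (complex^'n) set" where
  "ssum X Y = {x + y | x y. x \<in> X \<and> y \<in> Y}"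

lemma cx_sub: assumes "subspace X" shows "subspace (cx X)"
  unfolding subspace_def cx_def
proof (intro conjI ballI allI)
  show "0 \<in> {a + \<i> *s b |a b. a \<in> X \<and> b \<in> X}" using subspace_0[OF assms] by force
  fix x y assume "x \<in> {a + \<i> *s b |a b. a \<in> X \<and> b \<in> X}" "y \<in> {a + \<i> *s b |a b. a \<in> X \<and> b \<in> X}"
  then obtain a b c d where "a \<in> X" "b \<in> X" "c \<in> X" "d \<in> X" "x = a + \<i> *s b" "y = c + \<i> *s d" by blast
  moreover have "x + y = (a + c) + \<i> *s (b + d)" using calculation by (simp add: algebra_simps)
  ultimately show "x + y \<in> {a + \<i> *s b |a b. a \<in> X \<and> b \<in> X}"
    using subspace_add[OF assms] by blast
next
  fix r x assume "x \<in> {a + \<i> *s b |a b. a \<in> X \<and> b \<in> X}"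
  then obtain a b where "a \<in> X" "b \<in> X" "x = a + \<i> *s b" by blast
  moreover have "r *\<^sub>R x = r *\<^sub>R a + \<i> *s (r *\<^sub>R b)" using calculation by (simp add: algebra_simps)
  ultimately show "r *\<^sub>R x \<in> {a + \<i> *s b |a b. a \<in> X \<and> b \<in> X}"
    using subspace_scale[OF assms] by blast
qed

lemma cx_i: assumes "subspace X" "v \<in> cx X" shows "\<i> *s v \<in> cx X"
proof -
  obtain a b where "a \<in> X" "b \<in> X" "v = a + \<i> *s b" using assms(2) unfolding cx_def by blast
  moreover have "\<i> *s v = (- b) + \<i> *s a" using calculation by (simp add: algebra_simps)
  ultimately show ?thesis unfolding cx_def using subspace_neg[OF assms(1)] by blast
qed

lemma cx_zero: "cx {0} = {0}" unfolding cx_def by auto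

lemma cx_mono: "X \<subseteq> Y \<Longrightarrow> cx X \<subseteq> cx Y" unfolding cx_def by blast

lemma ssum_sub: "subspace X \<Longrightarrow> subspace Y \<Longrightarrow> subspace (ssum X Y)"
  unfolding ssum_def by (rule subspace_sums)

context clie
begin

lemma derived_mono: "A \<subseteq> B \<Longrightarrow> derived br A \<subseteq> derived br B"
  unfolding derived_def by (rule span_mono) blast

lemma derived_pow_mono: "A \<subseteq> B \<Longrightarrow> (derived br ^^ k) A \<subseteq> (derived br ^^ k) B"
  by (induct k) (simp_all add: derived_mono)

lemma derived_subspace: "subspace (derived br A)"
  unfolding derived_def by (rule subspace_span)

lemma derived_pow_subspace: "subspace A \<Longrightarrow> subspace ((derived br ^^ k) A)"
  by (cases k) (simp_all add: derived_subspace)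

lemma derived_le: "subspace X \<Longrightarrow> (\<And>x y. x \<in> X \<Longrightarrow> y \<in> X \<Longrightarrow> br x y \<in> X) \<Longrightarrow> derived br X \<subseteq> X"
  unfolding derived_def by (rule span_minimal) auto

lemma solvable_if: "subspace I \<Longrightarrow> (derived br ^^ k) I \<subseteq> {0} \<Longrightarrow> solvable_lie br I"
  unfolding solvable_lie_def using subspace_0[OF derived_pow_subspace] by blast

lemma solvable_le: "solvable_lie br I \<Longrightarrow> \<exists>k. (derived br ^^ k) I \<subseteq> {0}"
  unfolding solvable_lie_def by blast

lemma derived_cx: assumes X: "subspace X" shows "derived br (cx X) \<subseteq> cx (derived br X)"
  unfolding derived_def[of br "cx X"]
proof (rule span_minimal)
  show "subspace (cx (derived br X))" by (rule cx_sub[OF derived_subspace])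
  show "{br x y |x y. x \<in> cx X \<and> y \<in> cx X} \<subseteq> cx (derived br X)"
  proof (rule subsetI)
    fix v assume "v \<in> {br x y |x y. x \<in> cx X \<and> y \<in> cx X}"
    then obtain x y where v: "v = br x y" and xy: "x \<in> cx X" "y \<in> cx X" by blast
    from xy obtain a b c d where abcd: "a \<in> X" "b \<in> X" "c \<in> X" "d \<in> X" "x = a + \<i> *s b" "y = c + \<i> *s d"
      unfolding cx_def by blast
    have e: "v = (br a c - br b d) + \<i> *s (br a d + br b c)" using abcd v by (simp add: algebra_simps)
    have m: "br p q \<in> derived br X" if "p \<in> X" "q \<in> X" for p q
      unfolding derived_def using that by (intro span_base) blast
    have 1: "br a c - br b d \<in> derived br X"
      by (rule subspace_diff[OF derived_subspace]) (use m abcd in auto)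
    have 2: "br a d + br b c \<in> derived br X"
      by (rule subspace_add[OF derived_subspace]) (use m abcd in auto)
    show "v \<in> cx (derived br X)" unfolding cx_def using e 1 2 by blast
  qed
qed

lemma derived_pow_cx: "subspace X \<Longrightarrow> (derived br ^^ k) (cx X) \<subseteq> cx ((derived br ^^ k) X)"
proof (induct k)
  case 0 then show ?case by simp
next
  case (Suc k)
  have "(derived br ^^ Suc k) (cx X) \<subseteq> derived br (cx ((derived br ^^ k) X))"
    using derived_mono[OF Suc(1)[OF Suc(2)]] by simp
  also have "\<dots> \<subseteq> cx ((derived br ^^ Suc k) X)"
    using derived_cx[OF derived_pow_subspace[OF Suc(2)]] by simp
  finally show ?case .
qed

lemma derived_img:
  assumes l: "linear f" and h: "\<And>x y. f (br x y) = br (f x) (f y)"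
  shows "derived br (f ` A) = f ` derived br A"
proof -
  have "{br x y |x y. x \<in> f ` A \<and> y \<in> f ` A} = f ` {br x y |x y. x \<in> A \<and> y \<in> A}"
  proof (intro equalityI subsetI)
    fix v assume "v \<in> {br x y |x y. x \<in> f ` A \<and> y \<in> f ` A}"
    then obtain a b where ab: "a \<in> A" "b \<in> A" "v = br (f a) (f b)" by blast
    then have "v = f (br a b)" using h[of a b] by simp
    moreover have "br a b \<in> {br x y |x y. x \<in> A \<and> y \<in> A}" using ab by blast
    ultimately show "v \<in> f ` {br x y |x y. x \<in> A \<and> y \<in> A}" by blast
  next
    fix v assume "v \<in> f ` {br x y |x y. x \<in> A \<and> y \<in> A}"
    then obtain a b where ab: "a \<in> A" "b \<in> A" "v = f (br a b)" by blast
    then have "v = br (f a) (f b)" using h[of a b] by simp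
    then show "v \<in> {br x y |x y. x \<in> f ` A \<and> y \<in> f ` A}" using ab by blast
  qed
  then show ?thesis unfolding derived_def using span_linear_image[OF l] by simp
qed

lemma derived_pow_img:
  assumes l: "linear f" and h: "\<And>x y. f (br x y) = br (f x) (f y)"
  shows "(derived br ^^ k) (f ` A) = f ` (derived br ^^ k) A"
  by (induct k) (simp_all add: derived_img[OF l h])

lemma derived_ssum:
  assumes X: "subspace X" and K: "lie_ideal br UNIV K"
  shows "derived br (ssum X K) \<subseteq> ssum (derived br X) K"
  unfolding derived_def[of br "ssum X K"]
proof (rule span_minimal)
  have Ks: "subspace K" using K by (simp add: lie_ideal_def)
  show "subspace (ssum (derived br X) K)" by (rule ssum_sub[OF derived_subspace Ks])
  show "{br x y |x y. x \<in> ssum X K \<and> y \<in> ssum X K} \<subseteq> ssum (derived br X) K"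
  proof (rule subsetI)
    fix v assume "v \<in> {br x y |x y. x \<in> ssum X K \<and> y \<in> ssum X K}"
    then obtain x y where v: "v = br x y" and "x \<in> ssum X K" "y \<in> ssum X K" by blast
    then obtain a k b l where ak: "a \<in> X" "k \<in> K" "b \<in> X" "l \<in> K" "x = a + k" "y = b + l"
      unfolding ssum_def by blast
    have Kc: "br u w \<in> K" if "w \<in> K" for u w using K that by (simp add: lie_ideal_def)
    have "br k b = - br b k" by (rule anti)
    then have "br k b \<in> K" using Kc[OF ak(2), of b] subspace_neg[OF Ks] by simp
    then have "br a l + br k b + br k l \<in> K"
      using Kc[OF ak(4)] subspace_add[OF Ks] by blast
    moreover have "br a b \<in> derived br X" unfolding derived_def using ak by (intro span_base) blast
    moreover have "br x y = br a b + (br a l + br k b + br k l)" using ak by (simp add: algebra_simps)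
    ultimately show "v \<in> ssum (derived br X) K" unfolding ssum_def v by blast
  qed
qed

lemma sum_solvable:
  assumes J: "lie_ideal br UNIV J" and K: "lie_ideal br UNIV K"
    and sJ: "(derived br ^^ m) J \<subseteq> {0}" and sK: "(derived br ^^ n) K \<subseteq> {0}"
  shows "(derived br ^^ (n + m)) (ssum J K) \<subseteq> {0}"
proof -
  have Js: "subspace J" and Ks: "subspace K" using J K by (simp_all add: lie_ideal_def)
  have step: "(derived br ^^ k) (ssum J K) \<subseteq> ssum ((derived br ^^ k) J) K" for k
  proof (induct k)
    case 0 then show ?case by simp
  next
    case (Suc k)
    have "(derived br ^^ Suc k) (ssum J K) \<subseteq> derived br (ssum ((derived br ^^ k) J) K)"
      using derived_mono[OF Suc] by simp
    also have "\<dots> \<subseteq> ssum ((derived br ^^ Suc k) J) K"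
      using derived_ssum[OF derived_pow_subspace[OF Js] K] by simp
    finally show ?case .
  qed
  have "(derived br ^^ m) (ssum J K) \<subseteq> K"
  proof
    fix v assume "v \<in> (derived br ^^ m) (ssum J K)"
    then have "v \<in> ssum ((derived br ^^ m) J) K" using step[of m] by blast
    then obtain x y where "x \<in> (derived br ^^ m) J" "y \<in> K" "v = x + y" unfolding ssum_def by blast
    then show "v \<in> K" using sJ by auto
  qed
  then have "(derived br ^^ n) ((derived br ^^ m) (ssum J K)) \<subseteq> (derived br ^^ n) K"
    by (rule derived_pow_mono)
  moreover have "(derived br ^^ (n + m)) (ssum J K) = (derived br ^^ n) ((derived br ^^ m) (ssum J K))"
    by (simp only: funpow_add comp_def)
  ultimately show ?thesis using sK by auto
qed

end

context clie
begin

lemma ss_transfer: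
  assumes rfS: "real_form br S" and rfT: "real_form br T" and ssS: "semisimple br S"
  shows "semisimple br T"
  unfolding semisimple_def
proof (intro allI impI, elim conjE)
  fix I assume I: "lie_ideal br T I" and sI: "solvable_lie br I"
  have Is: "subspace I" and IT: "I \<subseteq> T" and Ic: "\<And>x y. x \<in> T \<Longrightarrow> y \<in> I \<Longrightarrow> br x y \<in> I"
    using I by (auto simp: lie_ideal_def)
  obtain k where kI: "(derived br ^^ k) I \<subseteq> {0}" using solvable_le[OF sI] by blast
  define J where "J = cx I"
  have Js: "subspace J" unfolding J_def by (rule cx_sub[OF Is])
  have Jc: "br x y \<in> J" if yJ: "y \<in> J" for x y
  proof -
    obtain a b where ab: "a \<in> I" "b \<in> I" "y = a + \<i> *s b" using yJ unfolding J_def cx_def by blast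
    define p q where "p = rfre T x" "q = rfim T x"
    have pq: "p \<in> T" "q \<in> T" "x = p + \<i> *s q" using rf_dec[OF rfT] p_q_def by auto
    have e: "br x y = (br p a - br q b) + \<i> *s (br p b + br q a)" using ab pq by (simp add: algebra_simps)
    have "br p a - br q b \<in> I" by (rule subspace_diff[OF Is]) (use Ic pq ab in auto)
    moreover have "br p b + br q a \<in> I" by (rule subspace_add[OF Is]) (use Ic pq ab in auto)
    ultimately show ?thesis unfolding J_def cx_def e by blast
  qed
  have JI: "lie_ideal br UNIV J" unfolding lie_ideal_def using Js Jc by blast
  have Ji: "\<i> *s v \<in> J" if "v \<in> J" for v using cx_i[OF Is] that unfolding J_def by blast
  have kJ: "(derived br ^^ k) J \<subseteq> {0}"
    using derived_pow_cx[OF Is, of k] cx_mono[OF kI] cx_zero unfolding J_def by blast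
  define \<sigma> where "\<sigma> = cj S"
  have sl: "linear \<sigma>" unfolding \<sigma>_def by (rule cj_lin[OF rfS])
  have sbr: "\<sigma> (br x y) = br (\<sigma> x) (\<sigma> y)" for x y unfolding \<sigma>_def by (rule cj_br[OF rfS])
  have ss: "\<sigma> (\<sigma> x) = x" for x unfolding \<sigma>_def by (rule cj_cj[OF rfS])
  have s0: "\<sigma> 0 = 0" using linear_0[OF sl] .
  define K where "K = \<sigma> ` J"
  have Ks: "subspace K" unfolding K_def by (rule linear_subspace_image[OF sl Js])
  have Kc: "br x y \<in> K" if yK: "y \<in> K" for x y
  proof -
    obtain w where w: "w \<in> J" "y = \<sigma> w" using yK unfolding K_def by blast
    have "br x y = \<sigma> (br (\<sigma> x) w)" using w by (simp add: sbr ss)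
    then show ?thesis unfolding K_def using Jc[OF w(1)] by blast
  qed
  have KI: "lie_ideal br UNIV K" unfolding lie_ideal_def using Ks Kc by blast
  have kK: "(derived br ^^ k) K \<subseteq> {0}"
    unfolding K_def derived_pow_img[OF sl sbr] using kJ s0 by blast
  define M where "M = ssum J K"
  have Ms: "subspace M" unfolding M_def by (rule ssum_sub[OF Js Ks])
  have Mc: "br x y \<in> M" if yM: "y \<in> M" for x y
  proof -
    obtain u w where "u \<in> J" "w \<in> K" "y = u + w" using yM unfolding M_def ssum_def by blast
    then show ?thesis unfolding M_def ssum_def using Jc Kc by force
  qed
  have kM: "(derived br ^^ (k + k)) M \<subseteq> {0}" unfolding M_def by (rule sum_solvable[OF JI KI kJ kK])
  define N where "N = M \<inter> S"
  have Ns: "subspace N" unfolding N_def by (rule subspace_inter[OF Ms rf_sub[OF rfS]])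
  have NI: "lie_ideal br S N" unfolding lie_ideal_def N_def
    using Ns Mc rf_brc[OF rfS] by (auto simp: N_def)
  have "(derived br ^^ (k + k)) N \<subseteq> {0}"
    using derived_pow_mono[of N M "k + k"] kM by (auto simp: N_def)
  then have "solvable_lie br N" by (rule solvable_if[OF Ns])
  then have N0: "N = {0}" using ssS NI unfolding semisimple_def by blast
  have Msig: "\<sigma> m \<in> M" if mM: "m \<in> M" for m
  proof -
    obtain u w where uw: "u \<in> J" "w \<in> J" "m = u + \<sigma> w" using mM unfolding M_def ssum_def K_def by blast
    have "\<sigma> m = w + \<sigma> u" using uw linear_add[OF sl] by (simp add: ss add.commute)
    then show ?thesis unfolding M_def ssum_def K_def using uw by blast
  qed
  have Mi: "\<i> *s m \<in> M" if mM: "m \<in> M" for m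
  proof -
    obtain u w where uw: "u \<in> J" "w \<in> J" "m = u + \<sigma> w" using mM unfolding M_def ssum_def K_def by blast
    have "\<i> *s \<sigma> w = \<sigma> (- (\<i> *s w))" unfolding \<sigma>_def by (simp add: cj_neg[OF rfS] cj_i[OF rfS])
    then have "\<i> *s m = \<i> *s u + \<sigma> (- (\<i> *s w))" using uw by simp
    moreover have "- (\<i> *s w) \<in> J" using Ji[OF uw(2)] subspace_neg[OF Js] by blast
    ultimately show ?thesis unfolding M_def ssum_def K_def using Ji[OF uw(1)] by blast
  qed
  have MS: "m + \<sigma> m \<in> S" for m
  proof -
    have e: "rfre S m + \<i> *s rfim S m = m" using rf_dec(3)[OF rfS, of m] by metis
    have "m + \<sigma> m = (rfre S m + \<i> *s rfim S m) + (rfre S m - \<i> *s rfim S m)"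
      unfolding \<sigma>_def cj_def using e by simp
    also have "\<dots> = rfre S m + rfre S m" by (simp add: algebra_simps)
    finally have "m + \<sigma> m = rfre S m + rfre S m" .
    moreover have "rfre S m + rfre S m \<in> S"
      by (rule subspace_add[OF rf_sub[OF rfS]]) (simp_all add: rf_dec(1)[OF rfS])
    ultimately show ?thesis by (simp only:)
  qed
  have Mneg: "\<sigma> m = - m" if "m \<in> M" for m
  proof -
    have "m + \<sigma> m \<in> N" unfolding N_def using MS subspace_add[OF Ms that Msig[OF that]] by blast
    then show ?thesis using N0 by (simp add: eq_neg_iff_add_eq_0 add.commute)
  qed
  have M0: "m = 0" if "m \<in> M" for m
  proof -
    have "\<sigma> (\<i> *s m) = - (\<i> *s m)" using Mneg[OF Mi[OF that]] .
    moreover have "\<sigma> (\<i> *s m) = \<i> *s m" unfolding \<sigma>_def using Mneg[OF that]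
      by (simp add: cj_i[OF rfS] \<sigma>_def)
    ultimately have "\<i> *s m = - (\<i> *s m)" by simp
    then have "\<i> *s m = 0" by (simp add: eq_neg_iff_add_eq_0 scaleR_2[symmetric])
    then have "\<i> *s (\<i> *s m) = 0" by simp
    then show ?thesis by simp
  qed
  have "I \<subseteq> M"
  proof
    fix a assume a: "a \<in> I"
    have "a = a + \<i> *s 0" by simp
    then have "a \<in> J" unfolding J_def cx_def using a subspace_0[OF Is] by blast
    moreover have "a = a + \<sigma> 0" using s0 by simp
    ultimately show "a \<in> M" unfolding M_def ssum_def K_def using subspace_0[OF Js] by blast
  qed
  then show "I = {0}" using M0 subspace_0[OF Is] by blast
qed

lemma derived_transfer:
  assumes rfS: "real_form br S" and rfT: "real_form br T" and dS: "derived br S = S"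
  shows "derived br T = T"
proof -
  define D where "D = derived br T"
  have Ds: "subspace D" unfolding D_def by (rule derived_subspace)
  have DT: "D \<subseteq> T" unfolding D_def by (rule derived_le[OF rf_sub[OF rfT] rf_brc[OF rfT]])
  have cxs: "subspace (cx D)" by (rule cx_sub[OF Ds])
  have allbr: "br u v \<in> cx D" for u v
  proof -
    define p q p' q' where "p = rfre T u" "q = rfim T u" "p' = rfre T v" "q' = rfim T v"
    have pq: "p \<in> T" "q \<in> T" "p' \<in> T" "q' \<in> T" "u = p + \<i> *s q" "v = p' + \<i> *s q'"
      using rf_dec[OF rfT] p_q_p'_q'_def by auto
    have e: "br u v = (br p p' - br q q') + \<i> *s (br p q' + br q p')" using pq by (simp add: algebra_simps)
    have m: "br a b \<in> D" if "a \<in> T" "b \<in> T" for a b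
      unfolding D_def derived_def using that by (intro span_base) blast
    have "br p p' - br q q' \<in> D" by (rule subspace_diff[OF Ds]) (use m pq in auto)
    moreover have "br p q' + br q p' \<in> D" by (rule subspace_add[OF Ds]) (use m pq in auto)
    ultimately show ?thesis unfolding cx_def e by blast
  qed
  have "S \<subseteq> cx D"
  proof -
    have "derived br S \<subseteq> cx D" unfolding derived_def by (rule span_minimal[OF _ cxs]) (use allbr in blast)
    then show ?thesis using dS by simp
  qed
  have "T \<subseteq> D"
  proof
    fix v assume v: "v \<in> T"
    have "rfre S v \<in> cx D" "rfim S v \<in> cx D" using rf_dec[OF rfS] \<open>S \<subseteq> cx D\<close> by auto
    then have "rfre S v + \<i> *s rfim S v \<in> cx D"
      using cx_i[OF Ds] subspace_add[OF cxs] by blast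
    moreover have "rfre S v + \<i> *s rfim S v = v" using rf_dec(3)[OF rfS, of v] by metis
    ultimately have "v \<in> cx D" by simp
    then obtain d1 d2 where d: "d1 \<in> D" "d2 \<in> D" "v = d1 + \<i> *s d2" unfolding cx_def by blast
    then have "rfre T v = d1" "rfim T v = d2" using rf_uniq[OF rfT, of d1 d2 v] DT by auto
    moreover have "rfre T v = v" "rfim T v = 0" using rf_S[OF rfT v] by auto
    ultimately show "v \<in> D" using d by simp
  qed
  then show ?thesis using DT unfolding D_def by blast
qed

end

lemma riesz:
  fixes D :: "(complex^'n) set" and P :: "complex^'n \<Rightarrow> complex^'n \<Rightarrow> real" and \<phi> :: "complex^'n \<Rightarrow> real"
  assumes D: "subspace D"
    and Pa: "\<And>u1 u2 y. u1 \<in> D \<Longrightarrow> u2 \<in> D \<Longrightarrow> y \<in> D \<Longrightarrow> P (u1 + u2) y = P u1 y + P u2 y"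
    and Ps: "\<And>u y r. u \<in> D \<Longrightarrow> y \<in> D \<Longrightarrow> P (r *\<^sub>R u) y = r * P u y"
    and Pa2: "\<And>u y1 y2. u \<in> D \<Longrightarrow> y1 \<in> D \<Longrightarrow> y2 \<in> D \<Longrightarrow> P u (y1 + y2) = P u y1 + P u y2"
    and Ps2: "\<And>u y r. u \<in> D \<Longrightarrow> y \<in> D \<Longrightarrow> P u (r *\<^sub>R y) = r * P u y"
    and pos: "\<And>u. u \<in> D \<Longrightarrow> P u u = 0 \<Longrightarrow> u = 0"
    and \<phi>a: "\<And>y1 y2. y1 \<in> D \<Longrightarrow> y2 \<in> D \<Longrightarrow> \<phi> (y1 + y2) = \<phi> y1 + \<phi> y2"
    and \<phi>s: "\<And>y r. y \<in> D \<Longrightarrow> \<phi> (r *\<^sub>R y) = r * \<phi> y"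
  shows "\<exists>d\<in>D. \<forall>y\<in>D. \<phi> y = P d y"
proof -
  obtain B where B: "independent B" "span B = D" using basis_of_subspace[OF D] by blast
  have finB: "finite B" using finiteI_independent[OF B(1)] .
  have BD: "b \<in> B \<Longrightarrow> b \<in> D" for b using B span_base by blast
  let ?R = "representation B"
  have P0: "y \<in> D \<Longrightarrow> P 0 y = 0" for y using Ps[of 0 y 0] subspace_0[OF D] by simp
  have P0r: "u \<in> D \<Longrightarrow> P u 0 = 0" for u using Ps2[of u 0 0] subspace_0[OF D] by simp
  have \<phi>0: "\<phi> 0 = 0" using \<phi>s[of 0 0] subspace_0[OF D] by simp
  have Psum: "P (\<Sum>a\<in>A. f a) y = (\<Sum>a\<in>A. P (f a) y)" if "finite A" "\<And>a. a \<in> A \<Longrightarrow> f a \<in> D" "y \<in> D" for A f y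
    using that by (induct A rule: finite_induct) (simp_all add: P0 Pa subspace_sum[OF D])
  have Psum2: "P u (\<Sum>a\<in>A. f a) = (\<Sum>a\<in>A. P u (f a))" if "finite A" "\<And>a. a \<in> A \<Longrightarrow> f a \<in> D" "u \<in> D" for A f u
    using that by (induct A rule: finite_induct) (simp_all add: P0r Pa2 subspace_sum[OF D])
  have \<phi>sum: "\<phi> (\<Sum>a\<in>A. f a) = (\<Sum>a\<in>A. \<phi> (f a))" if "finite A" "\<And>a. a \<in> A \<Longrightarrow> f a \<in> D" for A f
    using that by (induct A rule: finite_induct) (simp_all add: \<phi>0 \<phi>a subspace_sum[OF D])
  have exp: "y = (\<Sum>c\<in>B. ?R y c *\<^sub>R c)" if "y \<in> D" for y using expand_basis[OF B(1)] B(2) that by simp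
  have Pexp: "P u y = (\<Sum>c\<in>B. ?R y c * P u c)" if "u \<in> D" "y \<in> D" for u y
  proof -
    have "P u y = P u (\<Sum>c\<in>B. ?R y c *\<^sub>R c)" using exp[OF that(2)] by simp
    also have "\<dots> = (\<Sum>c\<in>B. ?R y c * P u c)"
      using Psum2[OF finB _ that(1)] Ps2 that BD subspace_scale[OF D] by simp
    finally show ?thesis .
  qed
  have Pexp1: "P u c = (\<Sum>b\<in>B. ?R u b * P b c)" if "u \<in> D" "c \<in> D" for u c
  proof -
    have "P u c = P (\<Sum>b\<in>B. ?R u b *\<^sub>R b) c" using exp[OF that(1)] by simp
    also have "\<dots> = (\<Sum>b\<in>B. ?R u b * P b c)"
      using Psum[OF finB _ that(2)] Ps that BD subspace_scale[OF D] by simp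
    finally show ?thesis .
  qed
  obtain G where G: "linear G" "\<And>b. b \<in> B \<Longrightarrow> G b = (\<Sum>c\<in>B. P b c *\<^sub>R c)"
    using linear_independent_extend[OF B(1), of "\<lambda>b. \<Sum>c\<in>B. P b c *\<^sub>R c"] by blast
  have Gu: "G u = (\<Sum>c\<in>B. P u c *\<^sub>R c)" if "u \<in> D" for u
  proof -
    have "G u = G (\<Sum>b\<in>B. ?R u b *\<^sub>R b)" using exp[OF that] by simp
    also have "\<dots> = (\<Sum>b\<in>B. ?R u b *\<^sub>R (\<Sum>c\<in>B. P b c *\<^sub>R c))"
      by (simp add: linear_sum[OF G(1)] linear_scale[OF G(1)] G(2))
    also have "\<dots> = (\<Sum>b\<in>B. \<Sum>c\<in>B. (?R u b * P b c) *\<^sub>R c)"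
      by (simp add: scaleR_sum_right scaleR_scaleR)
    also have "\<dots> = (\<Sum>c\<in>B. \<Sum>b\<in>B. (?R u b * P b c) *\<^sub>R c)"
      by (rule sum.swap)
    also have "\<dots> = (\<Sum>c\<in>B. (\<Sum>b\<in>B. ?R u b * P b c) *\<^sub>R c)"
      by (simp add: scaleR_sum_left)
    also have "\<dots> = (\<Sum>c\<in>B. P u c *\<^sub>R c)" using Pexp1 that BD by simp
    finally show ?thesis .
  qed
  have coef: "(\<Sum>c\<in>B. a c *\<^sub>R c) = (\<Sum>c\<in>B. b c *\<^sub>R c) \<Longrightarrow> x \<in> B \<Longrightarrow> a x = b x" for a b x
    using repr_sum_basis[OF B(1) order_refl, of a x] repr_sum_basis[OF B(1) order_refl, of b x] by simp
  have GD: "G u \<in> D" if "u \<in> D" for u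
    unfolding Gu[OF that] by (rule subspace_sum[OF D]) (simp add: BD subspace_scale[OF D])
  have inj: "inj_on G D"
    unfolding linear_injective_on_subspace_0[OF G(1) D]
  proof (intro ballI impI)
    fix u assume u: "u \<in> D" and "G u = 0"
    then have e: "(\<Sum>c\<in>B. P u c *\<^sub>R c) = (\<Sum>c\<in>B. 0 *\<^sub>R c)" using Gu by simp
    have "\<forall>c\<in>B. P u c = 0" using coef[OF e] by blast
    then have "P u u = 0" using Pexp[OF u u] by simp
    then show "u = 0" using pos u by blast
  qed
  have sD: "span D = D" using D by (rule span_eq_iff[THEN iffD2])
  have "inj_on G (span D)" unfolding sD by (rule inj)
  from dim_image_eq[OF G(1) this] have "dim (G ` D) = dim D" .
  then have GDD: "G ` D = D"
    using subspace_dim_equal[OF linear_subspace_image[OF G(1) D] D] GD by auto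
  define t where "t = (\<Sum>c\<in>B. \<phi> c *\<^sub>R c)"
  have "t \<in> D" unfolding t_def by (rule subspace_sum[OF D]) (simp add: BD subspace_scale[OF D])
  then have "t \<in> G ` D" using GDD by simp
  then obtain d where d: "d \<in> D" "G d = t" by blast
  have e: "(\<Sum>c\<in>B. P d c *\<^sub>R c) = (\<Sum>c\<in>B. \<phi> c *\<^sub>R c)" using Gu[OF d(1)] d(2) t_def by simp
  have "\<forall>c\<in>B. P d c = \<phi> c" using coef[OF e] by blast
  then have "\<phi> y = P d y" if "y \<in> D" for y
  proof -
    have "\<phi> y = \<phi> (\<Sum>c\<in>B. ?R y c *\<^sub>R c)" using exp[OF that] by simp
    also have "\<dots> = (\<Sum>c\<in>B. ?R y c * \<phi> c)"
      using \<phi>sum[OF finB] \<phi>s BD subspace_scale[OF D] by simp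
    also have "\<dots> = P d y" using Pexp[OF d(1) that] \<open>\<forall>c\<in>B. P d c = \<phi> c\<close> by simp
    finally show ?thesis .
  qed
  then show ?thesis using d(1) by blast
qed

lemma trace_cong_on:
  assumes D: "subspace (D::(complex^'n) set)" and fg: "\<And>v. v \<in> D \<Longrightarrow> f v = g v"
  shows "trace_on D f = trace_on D g"
proof -
  let ?B = "SOME B. independent B \<and> span B = D"
  obtain B0 where B0: "independent B0" "span B0 = D" by (rule basis_of_subspace[OF D])
  have B: "independent ?B \<and> span ?B = D" by (rule someI_ex) (use B0 in blast)
  have "f b = g b" if b: "b \<in> ?B" for b
  proof -
    have "b \<in> span ?B" using span_base[OF b] .
    then have "b \<in> D" using B by simp
    then show ?thesis by (rule fg)
  qed
  then show ?thesis unfolding trace_on_def Let_def by (intro sum.cong refl) simp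
qed

context clie
begin

lemma derived_full:
  assumes S: "subspace S" and cl: "\<And>x y. x \<in> S \<Longrightarrow> y \<in> S \<Longrightarrow> br x y \<in> S"
    and ss: "semisimple br S" and cart: "cartan_involution br (derived br S) \<sigma>"
  shows "derived br S = S"
proof -
  define D where "D = derived br S"
  have Ds: "subspace D" unfolding D_def by (rule derived_subspace)
  have DS: "D \<subseteq> S" unfolding D_def by (rule derived_le[OF S cl])
  have Dbr: "br x y \<in> D" if "x \<in> S" "y \<in> S" for x y
    unfolding D_def derived_def using that by (intro span_base) blast
  have Dcl: "br x v \<in> D" if "x \<in> S" "v \<in> D" for x v using Dbr that DS by blast
  have Dcl2: "br x y \<in> D" if "x \<in> D" "y \<in> D" for x y using Dcl that DS by blast
  have sD: "\<sigma> x \<in> D" if "x \<in> D" for x using cart that unfolding cartan_involution_def lie_involution_def D_def by blast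
  have sa: "\<sigma> (x + y) = \<sigma> x + \<sigma> y" if "x \<in> D" "y \<in> D" for x y
    using cart that unfolding cartan_involution_def lie_involution_def D_def by blast
  have ssc: "\<sigma> (r *\<^sub>R x) = r *\<^sub>R \<sigma> x" if "x \<in> D" for x r
    using cart that unfolding cartan_involution_def lie_involution_def D_def by blast
  have sinv: "\<sigma> (\<sigma> x) = x" if "x \<in> D" for x
    using cart that unfolding cartan_involution_def lie_involution_def D_def by blast
  have spos: "- killing br D x (\<sigma> x) > 0" if "x \<in> D" "x \<noteq> 0" for x
    using cart that unfolding cartan_involution_def D_def by blast
  have kill0: "w = 0" if "w \<in> D" "killing br D w (\<sigma> w) = 0" for w
    using spos[OF that(1)] that(2) by force
  have C0: "w = 0" if w: "w \<in> D" "\<forall>d\<in>D. br w d = 0" for w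
  proof -
    have "killing br D w (\<sigma> w) = trace_on D (\<lambda>v. 0)"
      unfolding killing_def by (rule trace_cong_on[OF Ds]) (use w sD Dcl2 in auto)
    then show ?thesis using kill0[OF w(1)] trace_zero[OF Ds] by simp
  qed
  define C where "C = {x \<in> S. \<forall>d\<in>D. br x d = 0}"
  have Cs: "subspace C" unfolding subspace_def C_def
    using subspace_0[OF S] subspace_add[OF S] subspace_scale[OF S] by auto
  have Cc: "br x c \<in> C" if "x \<in> S" "c \<in> C" for x c
  proof -
    have cS: "c \<in> S" using that C_def by auto
    have "br (br x c) d = 0" if d: "d \<in> D" for d
    proof -
      have "br c d = 0" "br c (br x d) = 0" using \<open>c \<in> C\<close> d Dcl[OF \<open>x \<in> S\<close> d] C_def by auto
      then show ?thesis using jac2[of x c d] by simp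
    qed
    then show ?thesis unfolding C_def using cl[OF that(1) cS] by blast
  qed
  have CI: "lie_ideal br S C" unfolding lie_ideal_def using Cs Cc C_def by auto
  have "derived br C \<subseteq> {0}" unfolding derived_def
  proof (rule span_minimal[OF _ subspace_single_0])
    show "{br x y |x y. x \<in> C \<and> y \<in> C} \<subseteq> {0}"
    proof
      fix v assume "v \<in> {br x y |x y. x \<in> C \<and> y \<in> C}"
      then obtain c c' where cc: "c \<in> C" "c' \<in> C" "v = br c c'" by blast
      have cS: "c \<in> S" "c' \<in> S" using cc C_def by auto
      have "v \<in> D" using Dbr[OF cS] cc by simp
      moreover have "v \<in> C" using Cc[OF cS(1) cc(2)] cc by simp
      ultimately have "v = 0" using C0 C_def by blast
      then show "v \<in> {0}" by simp
    qed
  qed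
  then have "(derived br ^^ 1) C \<subseteq> {0}" by simp
  then have "solvable_lie br C" by (rule solvable_if[OF Cs])
  then have C00: "C = {0}" using ss CI unfolding semisimple_def by blast
  have "S \<subseteq> D"
  proof
    fix x assume x: "x \<in> S"
    define P where "P u y = - trace_on D (\<lambda>v. br u (br (\<sigma> y) v))" for u y
    define \<phi> where "\<phi> y = trace_on D (\<lambda>v. br x (br (\<sigma> y) v))" for y
    have pres: "br a (br b v) \<in> D" if "a \<in> S" "b \<in> D" "v \<in> D" for a b v
      using Dcl[OF that(1) Dcl2[OF that(2,3)]] .
    have "\<exists>d\<in>D. \<forall>y\<in>D. \<phi> y = P d y"
    proof (rule riesz[OF Ds])
      fix u1 u2 y assume "u1 \<in> D" "u2 \<in> D" "y \<in> D"
      then show "P (u1 + u2) y = P u1 y + P u2 y" unfolding P_def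
        using trace_add[OF Ds lin_adad lin_adad] pres sD DS by (simp add: subset_iff)
    next
      fix u y r assume "u \<in> D" "y \<in> D"
      then show "P (r *\<^sub>R u) y = r * P u y" unfolding P_def
        using trace_scale[OF Ds lin_adad] pres sD DS by (simp add: subset_iff)
    next
      fix u y1 y2 assume "u \<in> D" "y1 \<in> D" "y2 \<in> D"
      then show "P u (y1 + y2) = P u y1 + P u y2" unfolding P_def
        using trace_add[OF Ds lin_adad lin_adad] pres sD DS sa by (simp add: subset_iff)
    next
      fix u y r assume "u \<in> D" "y \<in> D"
      then show "P u (r *\<^sub>R y) = r * P u y" unfolding P_def
        using trace_scale[OF Ds lin_adad] pres sD DS ssc by (simp add: subset_iff)
    next
      fix u assume "u \<in> D" "P u u = 0"
      then show "u = 0" using kill0 unfolding P_def killing_def by simp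
    next
      fix y1 y2 assume "y1 \<in> D" "y2 \<in> D"
      then show "\<phi> (y1 + y2) = \<phi> y1 + \<phi> y2" unfolding \<phi>_def
        using trace_add[OF Ds lin_adad lin_adad] pres sD x sa by simp
    next
      fix y r assume "y \<in> D"
      then show "\<phi> (r *\<^sub>R y) = r * \<phi> y" unfolding \<phi>_def
        using trace_scale[OF Ds lin_adad] pres sD x ssc by simp
    qed
    then obtain d where d: "d \<in> D" "\<And>y. y \<in> D \<Longrightarrow> \<phi> y = P d y" by blast
    define w where "w = x + d"
    have wS: "w \<in> S" unfolding w_def using x d(1) DS subspace_add[OF S] by blast
    have trw: "trace_on D (\<lambda>v. br w (br y v)) = 0" if y: "y \<in> D" for y
    proof -
      have "\<phi> (\<sigma> y) = P d (\<sigma> y)" using d(2) sD[OF y] by blast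
      then have "trace_on D (\<lambda>v. br x (br y v)) = - trace_on D (\<lambda>v. br d (br y v))"
        unfolding \<phi>_def P_def using sinv[OF y] by simp
      moreover have "trace_on D (\<lambda>v. br w (br y v)) = trace_on D (\<lambda>v. br x (br y v)) + trace_on D (\<lambda>v. br d (br y v))"
        unfolding w_def using trace_add[OF Ds lin_adad lin_adad] pres x d(1) y DS by (simp add: subset_iff)
      ultimately show ?thesis by simp
    qed
    have "br w y = 0" if y: "y \<in> D" for y
    proof -
      have wy: "br w y \<in> D" by (rule Dcl[OF wS y])
      define z where "z = \<sigma> (br w y)"
      have z: "z \<in> D" unfolding z_def by (rule sD[OF wy])
      have "killing br D (br w y) z = trace_on D (\<lambda>v. br w (br (br y z) v))"
        unfolding killing_def
        by (rule K_invar[OF Ds]) (use Dcl[OF wS] Dcl2 y z in auto)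
      also have "\<dots> = 0" using trw[OF Dcl2[OF y z]] .
      finally show ?thesis using kill0[OF wy] z_def by simp
    qed
    then have "w \<in> C" unfolding C_def using wS by blast
    then have "w = 0" using C00 by simp
    then have "x = - d" unfolding w_def by (simp add: eq_neg_iff_add_eq_0)
    then show "x \<in> D" using subspace_neg[OF Ds d(1)] by simp
  qed
  then show ?thesis using DS unfolding D_def by blast
qed

lemma derived_full_A:
  assumes S: "subspace S" and cl: "\<And>x y. x \<in> S \<Longrightarrow> y \<in> S \<Longrightarrow> br x y \<in> S"
    and ss: "semisimple br S" and cart: "cartan_involution br S \<theta>"
  shows "derived br S = S"
proof (rule derived_full[OF S cl ss])
  define D where "D = derived br S"
  have Ds: "subspace D" unfolding D_def by (rule derived_subspace)
  have DS: "D \<subseteq> S" unfolding D_def by (rule derived_le[OF S cl])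
  have Dbr: "br x y \<in> D" if "x \<in> S" "y \<in> S" for x y
    unfolding D_def derived_def using that by (intro span_base) blast
  have tS: "\<theta> x \<in> S" if "x \<in> S" for x using cart that unfolding cartan_involution_def lie_involution_def by blast
  have ta: "\<theta> (x + y) = \<theta> x + \<theta> y" if "x \<in> S" "y \<in> S" for x y
    using cart that unfolding cartan_involution_def lie_involution_def by blast
  have tsc: "\<theta> (r *\<^sub>R x) = r *\<^sub>R \<theta> x" if "x \<in> S" for x r
    using cart that unfolding cartan_involution_def lie_involution_def by blast
  have tbr: "\<theta> (br x y) = br (\<theta> x) (\<theta> y)" if "x \<in> S" "y \<in> S" for x y
    using cart that unfolding cartan_involution_def lie_involution_def by blast
  have t0: "\<theta> 0 = 0" using tsc[of 0 0] subspace_0[OF S] by simp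
  have "span {br x y |x y. x \<in> S \<and> y \<in> S} \<subseteq> {v \<in> S. \<theta> v \<in> D}"
  proof (rule span_minimal)
    show "subspace {v \<in> S. \<theta> v \<in> D}" unfolding subspace_def
      using t0 ta tsc subspace_0[OF S] subspace_add[OF S] subspace_scale[OF S]
        subspace_0[OF Ds] subspace_add[OF Ds] subspace_scale[OF Ds] by auto
    show "{br x y |x y. x \<in> S \<and> y \<in> S} \<subseteq> {v \<in> S. \<theta> v \<in> D}"
      using cl tbr Dbr tS by auto
  qed
  then have "D \<subseteq> {v \<in> S. \<theta> v \<in> D}" by (simp add: D_def derived_def)
  then have tD: "\<theta> x \<in> D" if "x \<in> D" for x using that by blast
  have "lie_involution br D \<theta>" unfolding lie_involution_def
    using tD cart DS unfolding cartan_involution_def lie_involution_def by (auto simp: subset_iff)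
  moreover have "- killing br D x (\<theta> x) > 0" if "x \<in> D" "x \<noteq> 0" for x
  proof -
    have "killing br S x (\<theta> x) = killing br D x (\<theta> x)" unfolding killing_def
      by (rule trace_restrict[OF Ds S DS lin_adad]) (use that DS tS Dbr cl in auto)
    then show ?thesis using cart that DS unfolding cartan_involution_def by auto
  qed
  ultimately show "cartan_involution br (derived br S) \<theta>" unfolding cartan_involution_def D_def by blast
qed

end

lemma lie_inv_cong:
  assumes "lie_involution br S f" and "\<And>v. v \<in> S \<Longrightarrow> f' v = f v" and "subspace S"
    and "\<And>x y. x \<in> S \<Longrightarrow> y \<in> S \<Longrightarrow> br x y \<in> S"
  shows "lie_involution br S f'"
  using assms subspace_add[OF assms(3)] subspace_scale[OF assms(3)]
  unfolding lie_involution_def by simp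

lemma tw_cong: assumes "\<And>v. v \<in> S \<Longrightarrow> f v = f' v" shows "tw S f = tw S f'"
proof (rule set_eqI)
  fix w show "w \<in> tw S f \<longleftrightarrow> w \<in> tw S f'"
  proof
    assume "w \<in> tw S f"
    then obtain x y where "x \<in> S" "f x = x" "y \<in> S" "f y = - y" "w = x + \<i> *s y" unfolding tw_def by blast
    then show "w \<in> tw S f'" unfolding tw_def using assms[of x] assms[of y] by auto
  next
    assume "w \<in> tw S f'"
    then obtain x y where "x \<in> S" "f' x = x" "y \<in> S" "f' y = - y" "w = x + \<i> *s y" unfolding tw_def by blast
    then show "w \<in> tw S f" unfolding tw_def using assms[of x] assms[of y] by auto
  qed
qed

definition Psi :: "(complex^'n \<Rightarrow> complex^'n \<Rightarrow> complex^'n)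
     \<Rightarrow> (complex^'n) set \<times> (complex^'n \<Rightarrow> complex^'n) \<times> (complex^'n)
     \<Rightarrow> (complex^'n) set \<times> (complex^'n \<Rightarrow> complex^'n) \<times> (complex^'n)" where
  "Psi br = (\<lambda>(g, \<tau>, z). (tw g \<tau>, (\<lambda>v. if v \<in> tw g \<tau> then exp_ad br pi z (cj g v) else 0), - (\<i> *s z)))"

context clie
begin

lemma Phi_form:
  assumes rf: "real_form br S" and inv: "lie_involution br S (\<lambda>v. if v \<in> S then tau_h br S h (\<theta> v) else 0)"
  shows "Phi br (S, \<theta>, h) = (tw S (\<lambda>v. if v \<in> S then tau_h br S h (\<theta> v) else 0),
     (\<lambda>v. if v \<in> tw S (\<lambda>v. if v \<in> S then tau_h br S h (\<theta> v) else 0) then cj S v else 0), \<i> *s h)"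
proof -
  define \<tau> where "\<tau> = (\<lambda>v. if v \<in> S then tau_h br S h (\<theta> v) else 0)"
  have inv': "lie_involution br S \<tau>" using inv \<tau>_def by simp
  have the: "(THE w. \<exists>x y. x \<in> S \<and> \<tau> x = x \<and> y \<in> S \<and> \<tau> y = - y \<and> v = x + \<i> *s y \<and> w = x - \<i> *s y) = cj S v"
    if v: "v \<in> tw S \<tau>" for v
  proof (rule the_equality)
    have "\<tau> (rfre S v) = rfre S v" "\<tau> (rfim S v) = - rfim S v" using tw_mem[OF rf inv'] v by auto
    then show "\<exists>x y. x \<in> S \<and> \<tau> x = x \<and> y \<in> S \<and> \<tau> y = - y \<and> v = x + \<i> *s y \<and> cj S v = x - \<i> *s y"
      using rf_dec[OF rf, of v] unfolding cj_def by blast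
  next
    fix w assume "\<exists>x y. x \<in> S \<and> \<tau> x = x \<and> y \<in> S \<and> \<tau> y = - y \<and> v = x + \<i> *s y \<and> w = x - \<i> *s y"
    then obtain x y where xy: "x \<in> S" "y \<in> S" "v = x + \<i> *s y" "w = x - \<i> *s y" by blast
    then have "rfre S v = x" "rfim S v = y" using rf_uniq[OF rf] by auto
    then show "w = cj S v" using xy(4) by (simp add: cj_def)
  qed
  note the' = the[unfolded tw_def \<tau>_def]
  show ?thesis
    unfolding Phi_def Let_def tw_def prod.case
    by (intro arg_cong2[where f=Pair] refl ext if_cong[OF refl _ refl] the') assumption
qed

end

context clie
begin

lemma K_zero_l: "subspace S \<Longrightarrow> killing br S 0 y = 0"
  unfolding killing_def using trace_zero[of S] by simp

context
  fixes g \<theta> h assumes A: "(g, \<theta>, h) \<in> setA br"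
begin

lemma Af: "real_form br g" "semisimple br g" "euler_elem br g h" "cartan_involution br g \<theta>"
  "\<theta> h = - h" "extensional0 g \<theta>"
  using A by (simp_all add: setA_def)

lemmas rfg = Af(1)
lemma hg: "h \<in> g" using Af(3) by (simp add: euler_elem_def)
lemma gsub: "subspace g" by (rule rf_sub[OF rfg])
lemma gbr: "x \<in> g \<Longrightarrow> y \<in> g \<Longrightarrow> br x y \<in> g" by (rule rf_brc[OF rfg])

lemma thS: "x \<in> g \<Longrightarrow> \<theta> x \<in> g" using Af(4) by (simp add: cartan_involution_def lie_involution_def)
lemma tha: "x \<in> g \<Longrightarrow> y \<in> g \<Longrightarrow> \<theta> (x + y) = \<theta> x + \<theta> y" using Af(4) by (simp add: cartan_involution_def lie_involution_def)
lemma thsc: "x \<in> g \<Longrightarrow> \<theta> (r *\<^sub>R x) = r *\<^sub>R \<theta> x" using Af(4) by (simp add: cartan_involution_def lie_involution_def)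
lemma thbr: "x \<in> g \<Longrightarrow> y \<in> g \<Longrightarrow> \<theta> (br x y) = br (\<theta> x) (\<theta> y)" using Af(4) by (simp add: cartan_involution_def lie_involution_def)
lemma thinv: "x \<in> g \<Longrightarrow> \<theta> (\<theta> x) = x" using Af(4) by (simp add: cartan_involution_def lie_involution_def)
lemma thneg: "x \<in> g \<Longrightarrow> \<theta> (- x) = - \<theta> x" using thsc[of x "-1"] by simp
lemma thdiff: "x \<in> g \<Longrightarrow> y \<in> g \<Longrightarrow> \<theta> (x - y) = \<theta> x - \<theta> y"
  using tha[of x "- y"] thneg[of y] subspace_neg[OF gsub] by simp

lemma cube_g: "v \<in> g \<Longrightarrow> br h (br h (br h v)) = br h v" by (rule euler_cube(1)[OF Af(3)])

lemma cube_L: "br h (br h (br h v)) = br h v"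
proof -
  have e: "rfre g v + \<i> *s rfim g v = v" using rf_dec(3)[OF rfg, of v] by metis
  have "br h (br h (br h (rfre g v + \<i> *s rfim g v))) = br h (rfre g v + \<i> *s rfim g v)"
    using cube_g[of "rfre g v"] cube_g[of "rfim g v"] rf_dec(1,2)[OF rfg] by simp
  then show ?thesis unfolding e .
qed

lemma T_g: "v \<in> g \<Longrightarrow> tauP br h v \<in> g"
  unfolding tauP_def using hg gbr subspace_diff[OF gsub] subspace_scale[OF gsub] by simp

lemma tauh_T: "v \<in> g \<Longrightarrow> tau_h br g h v = tauP br h v" by (rule euler_cube(2)[OF Af(3)])

lemma T_theta: assumes v: "v \<in> g" shows "\<theta> (tauP br h v) = tauP br h (\<theta> v)"
proof -
  have hv: "br h v \<in> g" "br h (br h v) \<in> g" using gbr hg v by auto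
  have "\<theta> (tauP br h v) = \<theta> v - 2 *\<^sub>R \<theta> (br h (br h v))"
    unfolding tauP_def using v hv by (simp add: thdiff thsc subspace_scale[OF gsub])
  also have "\<theta> (br h (br h v)) = br h (br h (\<theta> v))"
    using hv v hg by (simp add: thbr Af(5))
  finally show ?thesis by (simp add: tauP_def)
qed

definition "tauA = (\<lambda>v. if v \<in> g then tau_h br g h (\<theta> v) else 0)"

lemma tauA_eq: "v \<in> g \<Longrightarrow> tauA v = tauP br h (\<theta> v)"
  unfolding tauA_def using tauh_T thS by simp

lemma tauA_inv: "lie_involution br g tauA"
  unfolding lie_involution_def
proof (intro conjI ballI allI)
  fix x assume x: "x \<in> g"
  show "tauA x \<in> g" using tauA_eq[OF x] T_g thS x by simp
  show "tauA (r *\<^sub>R x) = r *\<^sub>R tauA x" for r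
    using tauA_eq x subspace_scale[OF gsub] thsc by (simp add: tauP_scaleR)
  show "tauA (tauA x) = x"
    using tauA_eq x T_g thS T_theta tauP_inv[OF cube_L] thinv by simp
  fix y assume y: "y \<in> g"
  show "tauA (x + y) = tauA x + tauA y"
    using tauA_eq x y subspace_add[OF gsub] tha by (simp add: tauP_add)
  show "tauA (br x y) = br (tauA x) (tauA y)"
    using tauA_eq x y gbr thbr by (simp add: tauP_aut[OF cube_L])
qed

lemma tauA_h: "tauA h = - h"
  using tauA_eq[OF hg] Af(5) by (simp add: tauP_def)

definition "gc = tw g tauA"

lemma rfgc: "real_form br gc" unfolding gc_def by (rule tw_rf[OF rfg tauA_inv])
lemma ssgc: "semisimple br gc" by (rule ss_transfer[OF rfg rfgc Af(2)])
lemma dg: "derived br g = g" by (rule derived_full_A[OF gsub _ Af(2) Af(4)]) (rule gbr)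
lemma dgc: "derived br gc = gc" by (rule derived_transfer[OF rfg rfgc dg])

lemma ih_gc: "\<i> *s h \<in> gc" unfolding gc_def by (rule tw_S2[OF rfg tauA_inv hg tauA_h])

lemma eulL: "euler_elem br UNIV (- h)"
proof (rule euler_intro)
  show "\<exists>y\<in>UNIV. br (- h) y \<noteq> 0" using Af(3) unfolding euler_elem_def by auto
qed (simp_all add: cube_L)

lemma expT: "exp_ad br pi (\<i> *s h) = tauP br h"
proof
  fix v
  have e: "euler_elem br UNIV (\<i> *s (\<i> *s h))" using eulL by simp
  show "exp_ad br pi (\<i> *s h) v = tauP br h v"
    unfolding exp_ad_formula[OF e] by (simp add: tauP_def)
qed

lemma T_alt: "tauP br h v = v + 2 *\<^sub>R br (\<i> *s h) (br (\<i> *s h) v)"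
  by (simp add: tauP_def)

lemma T_gc: assumes v: "v \<in> gc" shows "tauP br h v \<in> gc"
proof -
  have 1: "br (\<i> *s h) (br (\<i> *s h) v) \<in> gc" using rf_brc[OF rfgc] ih_gc v by blast
  have "v + 2 *\<^sub>R br (\<i> *s h) (br (\<i> *s h) v) \<in> gc"
    using subspace_add[OF rf_sub[OF rfgc]] subspace_scale[OF rf_sub[OF rfgc]] 1 v by blast
  then show ?thesis unfolding T_alt .
qed

lemma cart_gc: "cartan_involution br gc (tauP br h)"
  unfolding cartan_involution_def
proof (intro conjI ballI impI)
  show "lie_involution br gc (tauP br h)" unfolding lie_involution_def
    by (simp add: T_gc tauP_add tauP_scaleR tauP_aut[OF cube_L] tauP_inv[OF cube_L])
  fix x assume x: "x \<in> gc" and x0: "x \<noteq> 0"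
  define a b where "a = rfre g x" "b = rfim g x"
  have ab: "a \<in> g" "b \<in> g" "x = a + \<i> *s b" using rf_dec[OF rfg] a_b_def by auto
  have tab: "tauA a = a" "tauA b = - b" using x tw_mem[OF rfg tauA_inv] a_b_def unfolding gc_def by auto
  have "tauP br h (\<theta> a) = a" using tab(1) tauA_eq[OF ab(1)] by simp
  then have "tauP br h (tauP br h (\<theta> a)) = tauP br h a" by simp
  then have tha': "\<theta> a = tauP br h a" using tauP_inv[OF cube_L] by simp
  have "tauP br h (\<theta> b) = - b" using tab(2) tauA_eq[OF ab(2)] by simp
  then have "tauP br h (tauP br h (\<theta> b)) = tauP br h (- b)" by simp
  then have "\<theta> b = - tauP br h b" using tauP_inv[OF cube_L] by (simp add: tauP_neg)
  then have thb': "tauP br h b = - \<theta> b" by simp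
  have Tx: "tauP br h x = tauP br h a + \<i> *s tauP br h b" using ab(3) by (simp add: tauP_add tauP_smult)
  have reT: "rfre g (tauP br h x) = tauP br h a" "rfim g (tauP br h x) = tauP br h b"
    using rf_uniq[OF rfg T_g[OF ab(1)] T_g[OF ab(2)] Tx] by auto
  have "killing br gc x (tauP br h x) = killing br g a (\<theta> a) - killing br g b (- \<theta> b)"
    using KT[OF rfg rfgc x T_gc[OF x]] reT a_b_def tha' thb' by simp
  also have "\<dots> = killing br g a (\<theta> a) + killing br g b (\<theta> b)"
    using K_neg_r[OF gsub gbr ab(2) thS[OF ab(2)]] by simp
  finally have K: "killing br gc x (tauP br h x) = killing br g a (\<theta> a) + killing br g b (\<theta> b)" .
  have pos: "- killing br g u (\<theta> u) \<ge> 0" if "u \<in> g" for u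
  proof (cases "u = 0")
    case True then show ?thesis using K_zero_l[OF gsub] by simp
  next
    case False then show ?thesis using Af(4) that unfolding cartan_involution_def by force
  qed
  have "a \<noteq> 0 \<or> b \<noteq> 0" using x0 ab(3) by auto
  then have "- killing br g a (\<theta> a) > 0 \<or> - killing br g b (\<theta> b) > 0"
    using Af(4) ab unfolding cartan_involution_def by blast
  then show "- killing br gc x (tauP br h x) > 0" unfolding K using pos[OF ab(1)] pos[OF ab(2)] by linarith
qed

lemma Phi_A: "Phi br (g, \<theta>, h) = (gc, (\<lambda>v. if v \<in> gc then cj g v else 0), \<i> *s h)"
  using Phi_form[OF rfg tauA_inv[unfolded tauA_def]] unfolding gc_def tauA_def by simp

lemma A2B: "Phi br (g, \<theta>, h) \<in> setB br"
proof -
  have 1: "H_elem br gc (\<i> *s h)" unfolding H_elem_def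
    using ih_gc eulL dgc expT cart_gc by simp
  have 2: "lie_involution br gc (\<lambda>v. if v \<in> gc then cj g v else 0)"
    by (rule lie_inv_cong[OF tw_cj_inv[OF rfg tauA_inv, folded gc_def] _ rf_sub[OF rfgc] rf_brc[OF rfgc]]) simp
  have 3: "(if \<i> *s h \<in> gc then cj g (\<i> *s h) else 0) = - (\<i> *s h)"
    using ih_gc cj_iS[OF rfg hg] by simp
  have 4: "extensional0 gc (\<lambda>v. if v \<in> gc then cj g v else 0)" by (simp add: extensional0_def)
  show ?thesis unfolding Phi_A setB_def using rfgc ssgc 1 2 3 4 by simp
qed

lemma PsiPhi: "Psi br (Phi br (g, \<theta>, h)) = (g, \<theta>, h)"
proof -
  have tw1: "tw gc (\<lambda>v. if v \<in> gc then cj g v else 0) = g"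
    using tw_cong[of gc "\<lambda>v. if v \<in> gc then cj g v else 0" "cj g"] tw_back[OF rfg tauA_inv]
    unfolding gc_def by simp
  have fn: "(\<lambda>v. if v \<in> g then exp_ad br pi (\<i> *s h) (cj gc v) else 0) = \<theta>"
  proof
    fix v show "(if v \<in> g then exp_ad br pi (\<i> *s h) (cj gc v) else 0) = \<theta> v"
    proof (cases "v \<in> g")
      case True
      have "cj gc v = tauA v" unfolding gc_def by (rule tw_cj_S[OF rfg tauA_inv True])
      then show ?thesis using True expT tauA_eq[OF True] tauP_inv[OF cube_L] by simp
    next
      case False then show ?thesis using Af(6) by (simp add: extensional0_def)
    qed
  qed
  show ?thesis unfolding Phi_A Psi_def using tw1 fn by simp
qed

end

end

context clie
begin

context
  fixes g \<tau> z assumes B: "(g, \<tau>, z) \<in> setB br"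
begin

lemma Bf: "real_form br g" "semisimple br g" "H_elem br g z" "lie_involution br g \<tau>"
  "\<tau> z = - z" "extensional0 g \<tau>"
  using B by (simp_all add: setB_def)

lemmas rfgb = Bf(1)
lemma zg: "z \<in> g" using Bf(3) by (simp add: H_elem_def)
lemma eulz: "euler_elem br UNIV (\<i> *s z)" using Bf(3) by (simp add: H_elem_def)
lemma cartE: "cartan_involution br (derived br g) (exp_ad br pi z)" using Bf(3) by (simp add: H_elem_def)
lemma gsubb: "subspace g" by (rule rf_sub[OF rfgb])
lemma gbrb: "x \<in> g \<Longrightarrow> y \<in> g \<Longrightarrow> br x y \<in> g" by (rule rf_brc[OF rfgb])
lemma dgb: "derived br g = g" by (rule derived_full[OF gsubb _ Bf(2) cartE]) (rule gbrb)
lemma cartEg: "cartan_involution br g (exp_ad br pi z)" using cartE dgb by simp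

definition "hB = - (\<i> *s z)"

lemma cube_h: "br hB (br hB (br hB v)) = br hB v"
  using euler_cube(1)[OF eulz, of v] unfolding hB_def by simp

lemma E_T: "exp_ad br pi z v = tauP br hB v"
  unfolding exp_ad_formula[OF eulz] tauP_def hB_def by simp

lemma E_g: "v \<in> g \<Longrightarrow> exp_ad br pi z v \<in> g"
  unfolding exp_ad_formula[OF eulz] using zg gbrb subspace_add[OF gsubb] subspace_scale[OF gsubb] by simp

definition "gB = tw g \<tau>"

lemma rfgB: "real_form br gB" unfolding gB_def by (rule tw_rf[OF rfgb Bf(4)])
lemma ssgB: "semisimple br gB" by (rule ss_transfer[OF rfgb rfgB Bf(2)])

lemma hB_gB: "hB \<in> gB"
proof -
  have "- z \<in> g" using zg subspace_neg[OF gsubb] by blast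
  moreover have "\<tau> (- z) = - (- z)" using t_neg[OF rfgb Bf(4) zg] Bf(5) by simp
  ultimately have "\<i> *s (- z) \<in> gB" unfolding gB_def by (rule tw_S2[OF rfgb Bf(4)])
  then show ?thesis unfolding hB_def by simp
qed

lemma T_gB: assumes v: "v \<in> gB" shows "tauP br hB v \<in> gB"
proof -
  have 1: "br hB (br hB v) \<in> gB" using rf_brc[OF rfgB] hB_gB v by blast
  have "v - 2 *\<^sub>R br hB (br hB v) \<in> gB"
    using subspace_diff[OF rf_sub[OF rfgB]] subspace_scale[OF rf_sub[OF rfgB]] 1 v by blast
  then show ?thesis unfolding tauP_def .
qed

lemma eul_gB: "euler_elem br gB hB"
proof (rule euler_intro[OF rf_sub[OF rfgB] hB_gB])
  show "br hB v \<in> gB" if "v \<in> gB" for v using rf_brc[OF rfgB] hB_gB that by blast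
  show "br hB (br hB (br hB v)) = br hB v" for v by (rule cube_h)
  obtain y where y: "br (\<i> *s z) y \<noteq> 0" using eulz unfolding euler_elem_def by blast
  have "br hB y \<noteq> 0" using y unfolding hB_def by simp
  moreover have e: "rfre gB y + \<i> *s rfim gB y = y" by (rule sym, rule rf_dec(3)[OF rfgB])
  have "br hB (rfre gB y + \<i> *s rfim gB y) = br hB (rfre gB y) + \<i> *s br hB (rfim gB y)" by simp
  then have "br hB y = br hB (rfre gB y) + \<i> *s br hB (rfim gB y)" unfolding e .
  ultimately have "br hB (rfre gB y) \<noteq> 0 \<or> br hB (rfim gB y) \<noteq> 0" by auto
  then show "\<exists>y\<in>gB. br hB y \<noteq> 0" using rf_dec(1,2)[OF rfgB] by blast
qed

lemma cj_E: "cj g (tauP br hB v) = tauP br hB (cj g v)"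
proof -
  have "tauP br hB v = v + 2 *\<^sub>R br z (br z v)" by (simp add: tauP_def hB_def)
  then have "cj g (tauP br hB v) = cj g v + 2 *\<^sub>R br (cj g z) (br (cj g z) (cj g v))"
    by (simp add: cj_add[OF rfgb] cj_scaleR[OF rfgb] cj_br[OF rfgb])
  also have "\<dots> = tauP br hB (cj g v)" using zg by (simp add: cj_S[OF rfgb] tauP_def hB_def)
  finally show ?thesis .
qed

definition "thB = (\<lambda>v. if v \<in> gB then exp_ad br pi z (cj g v) else 0)"

lemma Psi_B: "Psi br (g, \<tau>, z) = (gB, thB, hB)"
  unfolding Psi_def gB_def thB_def hB_def by simp

lemma thB_eq: "v \<in> gB \<Longrightarrow> thB v = tauP br hB (cj g v)"
  unfolding thB_def E_T by simp

lemma inv0: "lie_involution br gB (\<lambda>v. tauP br hB (cj g v))"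
  unfolding lie_involution_def
proof (intro conjI ballI allI)
  fix x assume x: "x \<in> gB"
  show "tauP br hB (cj g x) \<in> gB" using T_gB tw_cj_mem[OF rfgb Bf(4)] x unfolding gB_def by blast
  show "tauP br hB (cj g (r *\<^sub>R x)) = r *\<^sub>R tauP br hB (cj g x)" for r
    by (simp add: cj_scaleR[OF rfgb] tauP_scaleR)
  show "tauP br hB (cj g (tauP br hB (cj g x))) = x"
    by (simp add: cj_E cj_cj[OF rfgb] tauP_inv[OF cube_h])
  fix y assume y: "y \<in> gB"
  show "tauP br hB (cj g (x + y)) = tauP br hB (cj g x) + tauP br hB (cj g y)"
    by (simp add: cj_add[OF rfgb] tauP_add)
  show "tauP br hB (cj g (br x y)) = br (tauP br hB (cj g x)) (tauP br hB (cj g y))"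
    by (simp add: cj_br[OF rfgb] tauP_aut[OF cube_h])
qed

lemma cart_gB: "cartan_involution br gB thB"
  unfolding cartan_involution_def
proof (intro conjI ballI impI)
  show "lie_involution br gB thB"
    by (rule lie_inv_cong[OF inv0 thB_eq rf_sub[OF rfgB] rf_brc[OF rfgB]])
  fix x assume x: "x \<in> gB" and x0: "x \<noteq> 0"
  define a b where "a = rfre g x" "b = rfim g x"
  have ab3: "x = a + \<i> *s b" unfolding a_b_def by (rule rf_dec(3)[OF rfgb])
  have ab12: "a \<in> g" "b \<in> g" unfolding a_b_def by (rule rf_dec(1)[OF rfgb], rule rf_dec(2)[OF rfgb])
  note ab = ab12 ab3
  let ?E = "exp_ad br pi z"
  have Eab: "?E a \<in> g" "- ?E b \<in> g" using E_g ab subspace_neg[OF gsubb] by auto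
  have cjx: "cj g x = a - \<i> *s b" unfolding cj_def a_b_def ..
  have "thB x = ?E (a - \<i> *s b)" unfolding thB_def using x cjx by simp
  also have "\<dots> = ?E a + \<i> *s (- ?E b)" unfolding E_T by (simp add: tauP_diff tauP_smult)
  finally have tx: "thB x = ?E a + \<i> *s (- ?E b)" .
  have re: "rfre g (thB x) = ?E a" "rfim g (thB x) = - ?E b"
    using rf_uniq[OF rfgb Eab tx] by auto
  have "tauP br hB (cj g x) \<in> gB" using inv0 x unfolding lie_involution_def by blast
  then have thx: "thB x \<in> gB" by (simp add: thB_eq[OF x])
  have "killing br gB x (thB x) = killing br g a (?E a) - killing br g b (- ?E b)"
    using KT[OF rfgb rfgB x thx] re unfolding a_b_def by simp
  also have "\<dots> = killing br g a (?E a) + killing br g b (?E b)"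
    using K_neg_r[OF gsubb gbrb ab(2) E_g[OF ab(2)]] by simp
  finally have K: "killing br gB x (thB x) = killing br g a (?E a) + killing br g b (?E b)" .
  have pos: "- killing br g u (?E u) \<ge> 0" if "u \<in> g" for u
  proof (cases "u = 0")
    case True then show ?thesis using K_zero_l[OF gsubb] by simp
  next
    case False then show ?thesis using cartEg that unfolding cartan_involution_def by force
  qed
  have "a \<noteq> 0 \<or> b \<noteq> 0" using x0 ab(3) by auto
  then have "- killing br g a (?E a) > 0 \<or> - killing br g b (?E b) > 0"
    using cartEg ab(1,2) unfolding cartan_involution_def by blast
  then show "- killing br gB x (thB x) > 0" unfolding K using pos[OF ab(1)] pos[OF ab(2)] by linarith
qed

lemma thB_h: "thB hB = - hB"
proof -
  have "cj g hB = \<i> *s z" unfolding hB_def using zg by (simp add: cj_neg[OF rfgb] cj_iS[OF rfgb])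
  then show ?thesis using thB_eq[OF hB_gB] by (simp add: tauP_def hB_def)
qed

lemma B2A: "Psi br (g, \<tau>, z) \<in> setA br"
proof -
  have "extensional0 gB thB" by (simp add: extensional0_def thB_def)
  then show ?thesis unfolding Psi_B setA_def using rfgB ssgB eul_gB cart_gB thB_h by simp
qed

definition "tau2 = (\<lambda>v. if v \<in> gB then tau_h br gB hB (thB v) else 0)"

lemma tau2_eq: "tau2 v = (if v \<in> gB then cj g v else 0)"
proof (cases "v \<in> gB")
  case True
  have "thB v \<in> gB" using cart_gB True unfolding cartan_involution_def lie_involution_def by blast
  then have "tau_h br gB hB (thB v) = tauP br hB (thB v)" by (rule euler_cube(2)[OF eul_gB])
  then show ?thesis unfolding tau2_def using True thB_eq[OF True] tauP_inv[OF cube_h] by simp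
qed (simp add: tau2_def)

lemma tau2_inv: "lie_involution br gB tau2"
  by (rule lie_inv_cong[OF tw_cj_inv[OF rfgb Bf(4), folded gB_def] _ rf_sub[OF rfgB] rf_brc[OF rfgB]])
    (simp add: tau2_eq)

lemma PhiPsi: "Phi br (Psi br (g, \<tau>, z)) = (g, \<tau>, z)"
proof -
  have P: "Phi br (gB, thB, hB) = (tw gB tau2, (\<lambda>v. if v \<in> tw gB tau2 then cj gB v else 0), \<i> *s hB)"
    using Phi_form[OF rfgB tau2_inv[unfolded tau2_def]] unfolding tau2_def .
  have tw2: "tw gB tau2 = g"
    using tw_cong[of gB tau2 "cj g"] tw_back[OF rfgb Bf(4)] tau2_eq unfolding gB_def by simp
  have fn: "(\<lambda>v. if v \<in> g then cj gB v else 0) = \<tau>"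
  proof
    fix v show "(if v \<in> g then cj gB v else 0) = \<tau> v"
    proof (cases "v \<in> g")
      case True then show ?thesis unfolding gB_def using tw_cj_S[OF rfgb Bf(4) True] by simp
    next
      case False then show ?thesis using Bf(6) by (simp add: extensional0_def)
    qed
  qed
  show ?thesis unfolding Psi_B P tw2 fn by (simp add: hB_def)
qed

end

end

theorem lemma3p10:
  fixes br :: "complex^'n \<Rightarrow> complex^'n \<Rightarrow> complex^'n"
  assumes "complex_lie br"
  shows "bij_betw (Phi br) (setA br) (setB br)"
proof -
  interpret clie br by unfold_locales (rule assms)
  show ?thesis
  proof (rule bij_betw_byWitness[where f'="Psi br"])
    show "\<forall>a\<in>setA br. Psi br (Phi br a) = a"
    proof
      fix a assume a: "a \<in> setA br"
      obtain g \<theta> h where "a = (g, \<theta>, h)" by (cases a) auto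
      then show "Psi br (Phi br a) = a" using PsiPhi a by simp
    qed
    show "\<forall>b\<in>setB br. Phi br (Psi br b) = b"
    proof
      fix b assume b: "b \<in> setB br"
      obtain g \<tau> z where "b = (g, \<tau>, z)" by (cases b) auto
      then show "Phi br (Psi br b) = b" using PhiPsi b by simp
    qed
    show "Phi br ` setA br \<subseteq> setB br"
    proof
      fix c assume "c \<in> Phi br ` setA br"
      then obtain a where a: "a \<in> setA br" "c = Phi br a" by blast
      obtain g \<theta> h where "a = (g, \<theta>, h)" by (cases a) auto
      then show "c \<in> setB br" using A2B a by simp
    qed
    show "Psi br ` setB br \<subseteq> setA br"
    proof
      fix c assume "c \<in> Psi br ` setB br"
      then obtain b where b: "b \<in> setB br" "c = Psi br b" by blast
      obtain g \<tau> z where "b = (g, \<tau>, z)" by (cases b) auto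
      then show "c \<in> setA br" using B2A b by simp
    qed
  qed
qed

end
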